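(* Let $(\Sigma,\Pi)$ be a first-order signature over a variable system with the de Bruijn property and $T$ a theory over it. Then the Lindenbaum–Tarski structure $\mathcal H_{\Sigma,\Pi,T}=(\mathcal F_\Sigma,\mathrm{Pr}_{\Sigma,\Pi,T},\forall,\exists)$ is a first-order hyperdoctrine over $\mathcal F_\Sigma$, and it has the universal model property: $(\Gamma,\phi)\le(\Gamma,\psi)$ in $\mathrm{Pr}_{\Sigma,\Pi,T}(\Gamma)$ if and only if $(\phi\Rightarrow_\Gamma\psi)\in\mathrm{Thm}(\Sigma,\Pi,T)$.
   Context: Type system: fix an infinite set $V$ of variables with decidable equality and a fresh variable provider: functions $\varphi,\mathsf{fr}$ assigning to each finite $X\subseteq V$ an inhabited $\varphi(X)\subseteq V\setminus X$ and $\mathsf{fr}(X)\in\varphi(X)$; de Bruijn property: $\varphi(X)=\{\mathsf{fr}(X)\}$. Disjoint sets $F$ (function symbols), $T$ (type symbols). Preelements: terms from variables and $F$; pretypes $S(t_1,\ldots,t_n)$, $S\in T$. $\mathrm V(E)$: variables of $E$; $E[\bar a/\bar x]$: simultaneous substitution. Precontext $\Gamma=x_1:A_1,\ldots,x_n:A_n$ with $x_k\in\varphi(\{x_1,\ldots,x_{k-1}\})$, $\mathrm V(A_k)\subseteq\{x_1,\ldots,x_{k-1}\}$; $\mathrm{OV}(\Gamma)=x_1,\ldots,x_n$; $\mathrm{Fresh}(\Gamma)=\varphi(\mathrm V(\Gamma))$, $\mathrm{fresh}(\Gamma)=\mathsf{fr}(\mathrm V(\Gamma))$; $E[\bar a/\Gamma]=E[\bar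 a/x_1,\ldots,x_n]$. Top variables $\mathrm{TV}(\langle\rangle)=\emptyset$, $\mathrm{TV}(\Gamma,x:A)=(\mathrm{TV}(\Gamma)\setminus\mathrm V(A))\cup\{x\}$; a determining sequence is a strictly increasing $\bar i=i_1,\ldots,i_k$ with $\mathrm{TV}(\Gamma)\subseteq\{x_{i_1},\ldots,x_{i_k}\}$, $\bar a_{\bar i}=a_{i_1},\ldots,a_{i_k}$. Declarations $(\Gamma,S,\bar i)$ and $(\Gamma,f,\bar i,U)$ ($\mathrm V(U)\subseteq\mathrm V(\Gamma)$), each symbol at most once. $\mathcal J(\Sigma)$: smallest set of judgements closed under (R1) $\langle\rangle$ context; (R2) $\Gamma$ context, $A$ type $(\Gamma)$ $\Rightarrow$ $\Gamma,x:A$ context ($x\in\mathrm{Fresh}(\Gamma)$); (R3) $x_1:A_1,\ldots,x_n:A_n$ context $\Rightarrow$ $x_i:A_i\ (x_1:A_1,\ldots,x_n:A_n)$; (R4) $(\Gamma,S,\bar i)\in\Sigma$, $\bar a:\Delta\to\Gamma$ $\Rightarrow$ $S(\bar a_{\bar i})$ type $(\Delta)$; (R5) $(\Gamma,f,\bar i,U)\in\Sigma$, $\bar a:\Delta\to\Gamma$, $U[\bar a/\Gamma]$ type $(\Delta)$ $\Rightarrow$ $f(\bar a_{\bar i}):U[\bar a/\Gamma]\ (\Delta)$; where "$\bar a:\Delta\to\Gamma$" abbreviates $\Delta$ context, $\Gamma$ context, $a_k:A_k[a_1,\ldots,a_{k-1}/x_1,\ldots,x_{k-1}]\ (\Delta)$.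 $\Sigma$ is a signature if declared contexts are contexts and declared $U$ are types in $\mathcal J(\Sigma)$. Cwf: a category $\mathcal C$ with terminal object; classes $\mathrm{Ty}(\Gamma)$ with functorial substitution $A\{f\}$; context extension $\Gamma.A$ with $\mathrm p(A):\Gamma.A\to\Gamma$; classes $\mathrm{Tm}(\Gamma,A)$ with functorial $a\{f\}\in\mathrm{Tm}(\Delta,A\{f\})$; $\mathrm v_A\in\mathrm{Tm}(\Gamma.A,A\{\mathrm p(A)\})$; $\langle f,a\rangle_A:\Delta\to\Gamma.A$ for $a\in\mathrm{Tm}(\Delta,A\{f\})$ with $\mathrm p(A)\langle f,a\rangle_A=f$, $\mathrm v_A\{\langle f,a\rangle_A\}=a$, $\langle\mathrm p(A)h,\mathrm v_A\{h\}\rangle_A=h$, $\langle f,a\rangle_A g=\langle fg,a\{g\}\rangle_A$; $f.A=\langle f\circ\mathrm p(A\{f\}),\mathrm v_{A\{f\}}\rangle_A:\Delta.A\{f\}\to\Gamma.A$. The cwf $\mathcal F_\Sigma$: objects are contexts $\Gamma$ (i.e. ($\Gamma$ context)$\in\mathcal J(\Sigma)$); morphisms $(\Delta,\Gamma,\bar a)$ with $\bar a:\Delta\to\Gamma$ in $\mathcal J(\Sigma)$, composed by substitution, identity $(\Gamma,\Gamma,\mathrm{OV}(\Gamma))$; $\mathrm{Ty}(\Gamma)=\{(\Gamma,A):(A\text{ type }(\Gamma))\in\mathcal J(\Sigma)\}$, $(\Gamma,A)\{(\Delta,\Gamma,\bar a)\}=(\Delta,A[\bar a/\Gamma])$; $\mathrm{Tm}(\Gamma,(\Gamma,A))=\{((\Gamma,A),a):(a:A\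 (\Gamma))\in\mathcal J(\Sigma)\}$; $\Gamma.(\Gamma,S)=\langle\Gamma,\mathrm{fresh}(\Gamma):S\rangle$, $\mathrm p=(\Gamma.(\Gamma,S),\Gamma,\mathrm{OV}(\Gamma))$, $\mathrm v=((\Gamma.(\Gamma,S),S),\mathrm{fresh}(\Gamma))$, $\langle(\Delta,\Gamma,\bar s),((\Delta,S[\bar s/\Gamma]),b)\rangle=(\Delta,\Gamma.(\Gamma,S),(\bar s,b))$. Heyting (pre)algebra: a preorder $\le$ (not necessarily antisymmetric) with $\top,\bot,\wedge,\vee,\to$ satisfying $\bot\le x\le\top$, $z\le x\wedge y$ iff $z\le x$ and $z\le y$, $x\vee y\le z$ iff $x\le z$ and $y\le z$, $z\le(x\to y)$ iff $z\wedge x\le y$; morphisms are monotone maps preserving the operations and constants. A first-order hyperdoctrine over a cwf $\mathcal C$ is $(\mathcal C,\mathrm{Pr},\forall,\exists)$ with $\mathrm{Pr}:\mathcal C^{\mathrm{op}}\to\mathrm{Heyting}$ a functor ($R\{f\}=\mathrm{Pr}(f)(R)$) and, for $S\in\mathrm{Ty}(\Gamma)$, monotone $\forall_S,\exists_S:\mathrm{Pr}(\Gamma.S)\to\mathrm{Pr}(\Gamma)$ with $Q\le\forall_S(R)$ iff $Q\{\mathrm p(S)\}\le R$, and $\exists_S(R)\le Q$ iff $R\le Q\{\mathrm p(S)\}$ ($Q\in\mathrm{Pr}(\Gamma)$, $R\in\mathrm{Pr}(\Gamma.S)$), and for $f:\Delta\to\Gamma$: $\forall_S(R)\{f\}=\forall_{S\{f\}}(R\{f.S\})$,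 $\exists_S(R)\{f\}=\exists_{S\{f\}}(R\{f.S\})$. Logic: predicate symbols from a set $P$ disjoint from $F\cup T$; a predicate declaration is $(\Gamma,\bar i,R)$ with ($\Gamma$ context)$\in\mathcal J(\Sigma)$, $\bar i$ determining, $R\in P$; a predicate signature $\Pi$ declares each symbol at most once. $\mathrm{Form}(\Sigma,\Pi)$ is the smallest set of judgements "$\phi$ form $(\Gamma)$" with: $R(\bar a_{\bar i})$ form $(\Delta)$ for $(\Gamma,\bar i,R)\in\Pi$ and $\bar a:\Delta\to\Gamma$ in $\mathcal J(\Sigma)$; $\bot,\top$ form $(\Gamma)$ for contexts $\Gamma$; $(\phi\circ\psi)$ form $(\Gamma)$ for $\circ\in\{\wedge,\vee,\to\}$ from $\phi,\psi$ form $(\Gamma)$; $(Qx:A)\phi$ form $(\Gamma)$ for $Q\in\{\forall,\exists\}$ from $\phi$ form $(\Gamma,x:A)$ (with $(A\text{ type }(\Gamma))\in\mathcal J(\Sigma)$). Capture-avoiding substitution for $\bar a:\Delta\to\Gamma$: $\phi\{(\Delta,\Gamma,\bar a)\}=\phi[\bar a/\Gamma]$ for atomic $\phi$; it commutes with $\top,\bot,\wedge,\vee,\to$; and $((Qx:A)\theta)\{(\Delta,\Gamma,\bar a)\}=(Qy:A[\bar a/\Gamma])\,\theta\{(\langle\Delta,y:A[\bar a/\Gamma]\rangle,\langle\Gamma,x:A\rangle,(\bar a,y))\}$ with $y=\mathrm{fresh}(\Delta)$. A sequent is $\phi\Rightarrow_\Gamma\psi$ with $\phi,\psi$ form $(\Gamma)$;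 a theory is a set of sequents. Write $\mathbf p_\Gamma(x:A)=(\langle\Gamma,x:A\rangle,\Gamma,\mathrm{OV}(\Gamma))$. $\mathrm{Thm}(\Sigma,\Pi,T)$ is the smallest set of sequents containing $T$ and closed under: $\phi\Rightarrow_\Gamma\phi$; cut (from $\phi\Rightarrow_\Gamma\theta$, $\theta\Rightarrow_\Gamma\psi$ infer $\phi\Rightarrow_\Gamma\psi$); $\theta\wedge\psi\Rightarrow_\Gamma\theta$, $\theta\wedge\psi\Rightarrow_\Gamma\psi$, from $\phi\Rightarrow_\Gamma\theta$, $\phi\Rightarrow_\Gamma\psi$ infer $\phi\Rightarrow_\Gamma\theta\wedge\psi$, $\phi\Rightarrow_\Gamma\top$; $\theta\Rightarrow_\Gamma\theta\vee\psi$, $\psi\Rightarrow_\Gamma\theta\vee\psi$, from $\theta\Rightarrow_\Gamma\phi$, $\psi\Rightarrow_\Gamma\phi$ infer $\theta\vee\psi\Rightarrow_\Gamma\phi$, $\bot\Rightarrow_\Gamma\phi$; $\theta\wedge\psi\Rightarrow_\Gamma\phi$ iff $\theta\Rightarrow_\Gamma\psi\to\phi$ (both directions as rules); $\phi\{\mathbf p_\Gamma(x:A)\}\Rightarrow_{\Gamma,x:A}\psi$ iff $\phi\Rightarrow_\Gamma(\forall x:A)\psi$ (both directions); $\psi\Rightarrow_{\Gamma,x:A}\phi\{\mathbf p_\Gamma(x:A)\}$ iff $(\exists x:A)\psi\Rightarrow_\Gamma\phi$ (both directions); and substitution: from $\phi\Rightarrow_\Gamma\psi$ and $\bar a:\Delta\to\Gamma$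 in $\mathcal J(\Sigma)$ infer $\phi\{(\Delta,\Gamma,\bar a)\}\Rightarrow_\Delta\psi\{(\Delta,\Gamma,\bar a)\}$. Lindenbaum–Tarski structure: $\mathrm{Pr}_{\Sigma,\Pi,T}(\Gamma)=\{(\Gamma,\phi):(\phi\text{ form }(\Gamma))\in\mathrm{Form}(\Sigma,\Pi)\}$ ordered by $(\Gamma,\phi)\le(\Gamma,\psi)$ iff $(\phi\Rightarrow_\Gamma\psi)\in\mathrm{Thm}(\Sigma,\Pi,T)$, with Heyting operations given by the connectives; $\mathrm{Pr}((\Delta,\Gamma,\bar a))(\Gamma,\phi)=(\Delta,\phi\{(\Delta,\Gamma,\bar a)\})$; $\forall_{(\Gamma,A)}(\langle\Gamma,x:A\rangle,\psi)=(\Gamma,(\forall x:A)\psi)$ and $\exists_{(\Gamma,A)}(\langle\Gamma,x:A\rangle,\psi)=(\Gamma,(\exists x:A)\psi)$. *)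

theory Defs
  imports Main
begin

section \<open>Generic categories with families and first-order hyperdoctrines\<close>

text \<open>A cwf is presented by its operations; all arguments that the paper leaves implicit
  (the context of a type) are passed explicitly.  pair G A f a is the morphism
  \<langle>f,a\<rangle>_A for A in Ty(G).\<close>

record ('o,'m,'ty,'tm) cwf_ops =
  Ob    :: "'o set"
  Hom   :: "'o \<Rightarrow> 'o \<Rightarrow> 'm set"
  comp  :: "'m \<Rightarrow> 'm \<Rightarrow> 'm"            \<comment> \<open>comp g f = g \<circ> f\<close>
  ident :: "'o \<Rightarrow> 'm"
  termo :: "'o"
  Ty    :: "'o \<Rightarrow> 'ty set"
  tsub  :: "'ty \<Rightarrow> 'm \<Rightarrow> 'ty"
  ext   :: "'o \<Rightarrow> 'ty \<Rightarrow> 'o"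
  pp    :: "'o \<Rightarrow> 'ty \<Rightarrow> 'm"
  Tm    :: "'o \<Rightarrow> 'ty \<Rightarrow> 'tm set"
  msub  :: "'tm \<Rightarrow> 'm \<Rightarrow> 'tm"
  vv    :: "'o \<Rightarrow> 'ty \<Rightarrow> 'tm"
  pair  :: "'o \<Rightarrow> 'ty \<Rightarrow> 'm \<Rightarrow> 'tm \<Rightarrow> 'm"

definition is_cwf :: "('o,'m,'ty,'tm,'z) cwf_ops_scheme \<Rightarrow> bool" where
  "is_cwf C \<longleftrightarrow>
     \<comment> \<open>category\<close>
     (\<forall>G\<in>Ob C. ident C G \<in> Hom C G G) \<and>
     (\<forall>D\<in>Ob C. \<forall>G\<in>Ob C. \<forall>E\<in>Ob C. \<forall>f\<in>Hom C D G. \<forall>g\<in>Hom C G E. comp C g f \<in> Hom C D E) \<and>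
     (\<forall>D\<in>Ob C. \<forall>G\<in>Ob C. \<forall>f\<in>Hom C D G. comp C (ident C G) f = f \<and> comp C f (ident C D) = f) \<and>
     (\<forall>A\<in>Ob C. \<forall>B\<in>Ob C. \<forall>D\<in>Ob C. \<forall>E\<in>Ob C. \<forall>f\<in>Hom C A B. \<forall>g\<in>Hom C B D. \<forall>h\<in>Hom C D E.
         comp C h (comp C g f) = comp C (comp C h g) f) \<and>
     \<comment> \<open>terminal object\<close>
     termo C \<in> Ob C \<and> (\<forall>G\<in>Ob C. \<exists>!f. f \<in> Hom C G (termo C)) \<and>
     \<comment> \<open>types and their substitution\<close>
     (\<forall>D\<in>Ob C. \<forall>G\<in>Ob C. \<forall>f\<in>Hom C D G. \<forall>A\<in>Ty C G. tsub C A f \<in> Ty C D) \<and>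
     (\<forall>G\<in>Ob C. \<forall>A\<in>Ty C G. tsub C A (ident C G) = A) \<and>
     (\<forall>D\<in>Ob C. \<forall>G\<in>Ob C. \<forall>E\<in>Ob C. \<forall>f\<in>Hom C D G. \<forall>g\<in>Hom C G E. \<forall>A\<in>Ty C E.
         tsub C A (comp C g f) = tsub C (tsub C A g) f) \<and>
     \<comment> \<open>terms and their substitution\<close>
     (\<forall>D\<in>Ob C. \<forall>G\<in>Ob C. \<forall>f\<in>Hom C D G. \<forall>A\<in>Ty C G. \<forall>a\<in>Tm C G A. msub C a f \<in> Tm C D (tsub C A f)) \<and>
     (\<forall>G\<in>Ob C. \<forall>A\<in>Ty C G. \<forall>a\<in>Tm C G A. msub C a (ident C G) = a) \<and>
     (\<forall>D\<in>Ob C. \<forall>G\<in>Ob C. \<forall>E\<in>Ob C. \<forall>f\<in>Hom C D G. \<forall>g\<in>Hom C G E. \<forall>A\<in>Ty C E. \<forall>a\<in>Tm C E A.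
         msub C a (comp C g f) = msub C (msub C a g) f) \<and>
     \<comment> \<open>context comprehension\<close>
     (\<forall>G\<in>Ob C. \<forall>A\<in>Ty C G.
         ext C G A \<in> Ob C \<and> pp C G A \<in> Hom C (ext C G A) G \<and>
         vv C G A \<in> Tm C (ext C G A) (tsub C A (pp C G A))) \<and>
     (\<forall>D\<in>Ob C. \<forall>G\<in>Ob C. \<forall>A\<in>Ty C G. \<forall>f\<in>Hom C D G. \<forall>a\<in>Tm C D (tsub C A f).
         pair C G A f a \<in> Hom C D (ext C G A) \<and>
         comp C (pp C G A) (pair C G A f a) = f \<and>
         msub C (vv C G A) (pair C G A f a) = a) \<and>
     (\<forall>D\<in>Ob C. \<forall>G\<in>Ob C. \<forall>A\<in>Ty C G. \<forall>h\<in>Hom C D (ext C G A).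
         pair C G A (comp C (pp C G A) h) (msub C (vv C G A) h) = h) \<and>
     (\<forall>E\<in>Ob C. \<forall>D\<in>Ob C. \<forall>G\<in>Ob C. \<forall>A\<in>Ty C G. \<forall>f\<in>Hom C D G. \<forall>a\<in>Tm C D (tsub C A f).
         \<forall>g\<in>Hom C E D. comp C (pair C G A f a) g = pair C G A (comp C f g) (msub C a g))"

definition qmor :: "('o,'m,'ty,'tm,'z) cwf_ops_scheme \<Rightarrow> 'o \<Rightarrow> 'o \<Rightarrow> 'm \<Rightarrow> 'ty \<Rightarrow> 'm" where
  "qmor C D G f A = pair C G A (comp C f (pp C D (tsub C A f))) (vv C D (tsub C A f))"

definition heyting_prealg ::
  "'a set \<Rightarrow> ('a \<Rightarrow> 'a \<Rightarrow> bool) \<Rightarrow> 'a \<Rightarrow> 'a \<Rightarrow> ('a \<Rightarrow> 'a \<Rightarrow> 'a) \<Rightarrow> ('a \<Rightarrow> 'a \<Rightarrow> 'a) \<Rightarrow> ('a \<Rightarrow> 'a \<Rightarrow> 'a) \<Rightarrow> bool" where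
  "heyting_prealg H le tp bt cj dj im \<longleftrightarrow>
     tp \<in> H \<and> bt \<in> H \<and>
     (\<forall>x\<in>H. \<forall>y\<in>H. cj x y \<in> H \<and> dj x y \<in> H \<and> im x y \<in> H) \<and>
     (\<forall>x\<in>H. le x x) \<and>
     (\<forall>x\<in>H. \<forall>y\<in>H. \<forall>z\<in>H. le x y \<longrightarrow> le y z \<longrightarrow> le x z) \<and>
     (\<forall>x\<in>H. le bt x \<and> le x tp) \<and>
     (\<forall>x\<in>H. \<forall>y\<in>H. \<forall>z\<in>H. le z (cj x y) \<longleftrightarrow> le z x \<and> le z y) \<and>
     (\<forall>x\<in>H. \<forall>y\<in>H. \<forall>z\<in>H. le (dj x y) z \<longleftrightarrow> le x z \<and> le y z) \<and>
     (\<forall>x\<in>H. \<forall>y\<in>H. \<forall>z\<in>H. le z (im x y) \<longleftrightarrow> le (cj z x) y)"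

record ('o,'m,'ty,'pr) hdoc_ops =
  Pr     :: "'o \<Rightarrow> 'pr set"
  hle    :: "'o \<Rightarrow> 'pr \<Rightarrow> 'pr \<Rightarrow> bool"
  htop   :: "'o \<Rightarrow> 'pr"
  hbot   :: "'o \<Rightarrow> 'pr"
  hand   :: "'o \<Rightarrow> 'pr \<Rightarrow> 'pr \<Rightarrow> 'pr"
  hor    :: "'o \<Rightarrow> 'pr \<Rightarrow> 'pr \<Rightarrow> 'pr"
  himp   :: "'o \<Rightarrow> 'pr \<Rightarrow> 'pr \<Rightarrow> 'pr"
  prsub  :: "'m \<Rightarrow> 'pr \<Rightarrow> 'pr"
  hall   :: "'o \<Rightarrow> 'ty \<Rightarrow> 'pr \<Rightarrow> 'pr"
  hex    :: "'o \<Rightarrow> 'ty \<Rightarrow> 'pr \<Rightarrow> 'pr"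

definition pr_heyting :: "('o,'m,'ty,'pr,'z) hdoc_ops_scheme \<Rightarrow> 'o \<Rightarrow> bool" where
  "pr_heyting P G \<longleftrightarrow> heyting_prealg (Pr P G) (hle P G) (htop P G) (hbot P G) (hand P G) (hor P G) (himp P G)"

definition heyting_hom :: "('o,'m,'ty,'pr,'z) hdoc_ops_scheme \<Rightarrow> 'o \<Rightarrow> 'o \<Rightarrow> ('pr \<Rightarrow> 'pr) \<Rightarrow> bool" where
  "heyting_hom P G D h \<longleftrightarrow>
     (\<forall>x\<in>Pr P G. h x \<in> Pr P D) \<and>
     (\<forall>x\<in>Pr P G. \<forall>y\<in>Pr P G. hle P G x y \<longrightarrow> hle P D (h x) (h y)) \<and>
     h (htop P G) = htop P D \<and> h (hbot P G) = hbot P D \<and>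
     (\<forall>x\<in>Pr P G. \<forall>y\<in>Pr P G.
        h (hand P G x y) = hand P D (h x) (h y) \<and>
        h (hor P G x y) = hor P D (h x) (h y) \<and>
        h (himp P G x y) = himp P D (h x) (h y))"

definition first_order_hyperdoctrine ::
  "('o,'m,'ty,'tm,'z1) cwf_ops_scheme \<Rightarrow> ('o,'m,'ty,'pr,'z2) hdoc_ops_scheme \<Rightarrow> bool" where
  "first_order_hyperdoctrine C P \<longleftrightarrow>
     is_cwf C \<and>
     \<comment> \<open>Pr : C^op \<rightarrow> Heyting is a functor\<close>
     (\<forall>G\<in>Ob C. pr_heyting P G) \<and>
     (\<forall>D\<in>Ob C. \<forall>G\<in>Ob C. \<forall>f\<in>Hom C D G. heyting_hom P G D (prsub P f)) \<and>
     (\<forall>G\<in>Ob C. \<forall>R\<in>Pr P G. prsub P (ident C G) R = R) \<and>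
     (\<forall>D\<in>Ob C. \<forall>G\<in>Ob C. \<forall>E\<in>Ob C. \<forall>f\<in>Hom C D G. \<forall>g\<in>Hom C G E. \<forall>R\<in>Pr P E.
         prsub P (comp C g f) R = prsub P f (prsub P g R)) \<and>
     \<comment> \<open>quantifiers\<close>
     (\<forall>G\<in>Ob C. \<forall>S\<in>Ty C G.
        (\<forall>R\<in>Pr P (ext C G S). hall P G S R \<in> Pr P G \<and> hex P G S R \<in> Pr P G) \<and>
        (\<forall>R\<in>Pr P (ext C G S). \<forall>R'\<in>Pr P (ext C G S). hle P (ext C G S) R R' \<longrightarrow>
             hle P G (hall P G S R) (hall P G S R') \<and> hle P G (hex P G S R) (hex P G S R')) \<and>
        (\<forall>Q\<in>Pr P G. \<forall>R\<in>Pr P (ext C G S).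
             (hle P G Q (hall P G S R) \<longleftrightarrow> hle P (ext C G S) (prsub P (pp C G S) Q) R) \<and>
             (hle P G (hex P G S R) Q \<longleftrightarrow> hle P (ext C G S) R (prsub P (pp C G S) Q))) \<and>
        (\<forall>D\<in>Ob C. \<forall>f\<in>Hom C D G. \<forall>R\<in>Pr P (ext C G S).
             prsub P f (hall P G S R) = hall P D (tsub C S f) (prsub P (qmor C D G f S) R) \<and>
             prsub P f (hex P G S R) = hex P D (tsub C S f) (prsub P (qmor C D G f S) R)))"

section \<open>Variable systems\<close>

definition var_system :: "('v set \<Rightarrow> 'v set) \<Rightarrow> ('v set \<Rightarrow> 'v) \<Rightarrow> bool" where
  "var_system phi fr \<longleftrightarrow> infinite (UNIV :: 'v set) \<and>
     (\<forall>X. finite X \<longrightarrow> phi X \<subseteq> - X \<and> fr X \<in> phi X)"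

definition de_bruijn :: "('v set \<Rightarrow> 'v set) \<Rightarrow> ('v set \<Rightarrow> 'v) \<Rightarrow> bool" where
  "de_bruijn phi fr \<longleftrightarrow> (\<forall>X. finite X \<longrightarrow> phi X = {fr X})"

section \<open>Raw syntax\<close>

datatype ('v,'f) trm = Var 'v | App 'f "('v,'f) trm list"
datatype ('v,'f,'t) pty = TyApp 't "('v,'f) trm list"
type_synonym ('v,'f,'t) ctx = "('v \<times> ('v,'f,'t) pty) list"

datatype ('v,'f,'t,'p) fm =
    Atom 'p "('v,'f) trm list" | FBot | FTop
  | FConj "('v,'f,'t,'p) fm" "('v,'f,'t,'p) fm"
  | FDisj "('v,'f,'t,'p) fm" "('v,'f,'t,'p) fm"
  | FImp "('v,'f,'t,'p) fm" "('v,'f,'t,'p) fm"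
  | FAll 'v "('v,'f,'t) pty" "('v,'f,'t,'p) fm"
  | FEx 'v "('v,'f,'t) pty" "('v,'f,'t,'p) fm"

fun vars_trm :: "('v,'f) trm \<Rightarrow> 'v set" where
  "vars_trm (Var x) = {x}"
| "vars_trm (App f ts) = (\<Union>t\<in>set ts. vars_trm t)"

fun vars_typ :: "('v,'f,'t) pty \<Rightarrow> 'v set" where
  "vars_typ (TyApp S ts) = (\<Union>t\<in>set ts. vars_trm t)"

definition OV :: "('v,'f,'t) ctx \<Rightarrow> 'v list" where
  "OV G = map fst G"

definition vars_ctx :: "('v,'f,'t) ctx \<Rightarrow> 'v set" where
  "vars_ctx G = set (OV G) \<union> (\<Union>A\<in>set (map snd G). vars_typ A)"

fun subst_trm :: "('v \<Rightarrow> ('v,'f) trm) \<Rightarrow> ('v,'f) trm \<Rightarrow> ('v,'f) trm" where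
  "subst_trm s (Var x) = s x"
| "subst_trm s (App f ts) = App f (map (subst_trm s) ts)"

fun subst_typ :: "('v \<Rightarrow> ('v,'f) trm) \<Rightarrow> ('v,'f,'t) pty \<Rightarrow> ('v,'f,'t) pty" where
  "subst_typ s (TyApp S ts) = TyApp S (map (subst_trm s) ts)"

definition smap :: "'v list \<Rightarrow> ('v,'f) trm list \<Rightarrow> 'v \<Rightarrow> ('v,'f) trm" where
  "smap xs as y = (case map_of (zip xs as) y of Some a \<Rightarrow> a | None \<Rightarrow> Var y)"

text \<open>Selection as_is (indices are 0-based here).\<close>
definition sel :: "'a list \<Rightarrow> nat list \<Rightarrow> 'a list" where
  "sel as is = map (\<lambda>i. as ! i) is"

definition precontext :: "('v set \<Rightarrow> 'v set) \<Rightarrow> ('v,'f,'t) ctx \<Rightarrow> bool" where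
  "precontext phi G \<longleftrightarrow> (\<forall>k<length G.
     fst (G ! k) \<in> phi (set (take k (OV G))) \<and> vars_typ (snd (G ! k)) \<subseteq> set (take k (OV G)))"

definition TV :: "('v,'f,'t) ctx \<Rightarrow> 'v set" where
  "TV G = foldl (\<lambda>S (x, A). (S - vars_typ A) \<union> {x}) {} G"

definition determining :: "('v,'f,'t) ctx \<Rightarrow> nat list \<Rightarrow> bool" where
  "determining G is \<longleftrightarrow> sorted_wrt (<) is \<and> (\<forall>i\<in>set is. i < length G) \<and>
     TV G \<subseteq> {fst (G ! i) | i. i \<in> set is}"

section \<open>Judgements and signatures\<close>

datatype ('v,'f,'t) judg =
    IsCtx "('v,'f,'t) ctx"
  | IsType "('v,'f,'t) ctx" "('v,'f,'t) pty"
  | HasType "('v,'f,'t) ctx" "('v,'f) trm" "('v,'f,'t) pty"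

text \<open>A signature \<Sigma> is given by partial maps on the type and function symbols
  (so each symbol is declared at most once): TD S = Some (G, is) is the declaration (G,S,is),
  FD f = Some (G, is, U) is the declaration (G,f,is,U).\<close>

inductive_set J :: "('v set \<Rightarrow> 'v set) \<Rightarrow> ('t \<Rightarrow> (('v,'f,'t) ctx \<times> nat list) option)
    \<Rightarrow> ('f \<Rightarrow> (('v,'f,'t) ctx \<times> nat list \<times> ('v,'f,'t) pty) option) \<Rightarrow> ('v,'f,'t) judg set"
  for phi TD FD where
  R1: "IsCtx [] \<in> J phi TD FD"
| R2: "IsCtx G \<in> J phi TD FD \<Longrightarrow> IsType G A \<in> J phi TD FD \<Longrightarrow> x \<in> phi (vars_ctx G)
       \<Longrightarrow> IsCtx (G @ [(x, A)]) \<in> J phi TD FD"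
| R3: "IsCtx G \<in> J phi TD FD \<Longrightarrow> i < length G
       \<Longrightarrow> HasType G (Var (fst (G ! i))) (snd (G ! i)) \<in> J phi TD FD"
| R4: "TD S = Some (G, is) \<Longrightarrow>
       IsCtx D \<in> J phi TD FD \<Longrightarrow> IsCtx G \<in> J phi TD FD \<Longrightarrow> length as = length G \<Longrightarrow>
       (\<forall>k<length G. HasType D (as ! k)
          (subst_typ (smap (take k (OV G)) (take k as)) (snd (G ! k))) \<in> J phi TD FD) \<Longrightarrow>
       IsType D (TyApp S (sel as is)) \<in> J phi TD FD"
| R5: "FD f = Some (G, is, U) \<Longrightarrow>
       IsCtx D \<in> J phi TD FD \<Longrightarrow> IsCtx G \<in> J phi TD FD \<Longrightarrow> length as = length G \<Longrightarrow>
       (\<forall>k<length G. HasType D (as ! k)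
          (subst_typ (smap (take k (OV G)) (take k as)) (snd (G ! k))) \<in> J phi TD FD) \<Longrightarrow>
       IsType D (subst_typ (smap (OV G) as) U) \<in> J phi TD FD \<Longrightarrow>
       HasType D (App f (sel as is)) (subst_typ (smap (OV G) as) U) \<in> J phi TD FD"

definition morJ where
  "morJ phi TD FD D G as \<longleftrightarrow>
     IsCtx D \<in> J phi TD FD \<and> IsCtx G \<in> J phi TD FD \<and> length as = length G \<and>
     (\<forall>k<length G. HasType D (as ! k)
          (subst_typ (smap (take k (OV G)) (take k as)) (snd (G ! k))) \<in> J phi TD FD)"

definition is_signature where
  "is_signature phi TD FD \<longleftrightarrow>
     (\<forall>S G is. TD S = Some (G, is) \<longrightarrow>
        precontext phi G \<and> determining G is \<and> IsCtx G \<in> J phi TD FD) \<and>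
     (\<forall>f G is U. FD f = Some (G, is, U) \<longrightarrow>
        precontext phi G \<and> determining G is \<and> vars_typ U \<subseteq> vars_ctx G \<and>
        IsCtx G \<in> J phi TD FD \<and> IsType G U \<in> J phi TD FD)"

text \<open>Predicate signature \<Pi>: PD R = Some (G, is) is the declaration (G,is,R).\<close>
definition is_pred_signature where
  "is_pred_signature phi TD FD PD \<longleftrightarrow>
     (\<forall>R G is. PD R = Some (G, is) \<longrightarrow> IsCtx G \<in> J phi TD FD \<and> determining G is)"

section \<open>Formulas, substitution, theorems\<close>

inductive_set Form for phi TD FD
  and PD :: "'p \<Rightarrow> (('v,'f,'t) ctx \<times> nat list) option" where
  atom: "PD R = Some (G, is) \<Longrightarrow> morJ phi TD FD D G as \<Longrightarrow> (D, Atom R (sel as is)) \<in> Form phi TD FD PD"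
| bot: "IsCtx G \<in> J phi TD FD \<Longrightarrow> (G, FBot) \<in> Form phi TD FD PD"
| top: "IsCtx G \<in> J phi TD FD \<Longrightarrow> (G, FTop) \<in> Form phi TD FD PD"
| conj: "(G, \<phi>) \<in> Form phi TD FD PD \<Longrightarrow> (G, \<psi>) \<in> Form phi TD FD PD \<Longrightarrow> (G, FConj \<phi> \<psi>) \<in> Form phi TD FD PD"
| disj: "(G, \<phi>) \<in> Form phi TD FD PD \<Longrightarrow> (G, \<psi>) \<in> Form phi TD FD PD \<Longrightarrow> (G, FDisj \<phi> \<psi>) \<in> Form phi TD FD PD"
| imp: "(G, \<phi>) \<in> Form phi TD FD PD \<Longrightarrow> (G, \<psi>) \<in> Form phi TD FD PD \<Longrightarrow> (G, FImp \<phi> \<psi>) \<in> Form phi TD FD PD"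
| all: "(G @ [(x, A)], \<phi>) \<in> Form phi TD FD PD \<Longrightarrow> IsType G A \<in> J phi TD FD \<Longrightarrow> (G, FAll x A \<phi>) \<in> Form phi TD FD PD"
| ex: "(G @ [(x, A)], \<phi>) \<in> Form phi TD FD PD \<Longrightarrow> IsType G A \<in> J phi TD FD \<Longrightarrow> (G, FEx x A \<phi>) \<in> Form phi TD FD PD"

fun fsub :: "('v set \<Rightarrow> 'v) \<Rightarrow> ('v,'f,'t) ctx \<Rightarrow> ('v,'f,'t) ctx \<Rightarrow> ('v,'f) trm list
    \<Rightarrow> ('v,'f,'t,'p) fm \<Rightarrow> ('v,'f,'t,'p) fm" where
  "fsub fr D G as (Atom R ts) = Atom R (map (subst_trm (smap (OV G) as)) ts)"
| "fsub fr D G as FBot = FBot"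
| "fsub fr D G as FTop = FTop"
| "fsub fr D G as (FConj \<phi> \<psi>) = FConj (fsub fr D G as \<phi>) (fsub fr D G as \<psi>)"
| "fsub fr D G as (FDisj \<phi> \<psi>) = FDisj (fsub fr D G as \<phi>) (fsub fr D G as \<psi>)"
| "fsub fr D G as (FImp \<phi> \<psi>) = FImp (fsub fr D G as \<phi>) (fsub fr D G as \<psi>)"
| "fsub fr D G as (FAll x A \<theta>) =
     (let y = fr (vars_ctx D); A' = subst_typ (smap (OV G) as) A
      in FAll y A' (fsub fr (D @ [(y, A')]) (G @ [(x, A)]) (as @ [Var y]) \<theta>))"
| "fsub fr D G as (FEx x A \<theta>) =
     (let y = fr (vars_ctx D); A' = subst_typ (smap (OV G) as) A
      in FEx y A' (fsub fr (D @ [(y, A')]) (G @ [(x, A)]) (as @ [Var y]) \<theta>))"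

definition fsub_p where
  "fsub_p fr G x A \<phi> = fsub fr (G @ [(x, A)]) G (map Var (OV G)) \<phi>"

definition is_theory where
  "is_theory phi TD FD PD T \<longleftrightarrow>
     (\<forall>(G, \<phi>, \<psi>)\<in>T. (G, \<phi>) \<in> Form phi TD FD PD \<and> (G, \<psi>) \<in> Form phi TD FD PD)"

text \<open>Sequents are triples (G, \<phi>, \<psi>) for \<phi> \<Rightarrow>_G \<psi>.  Each rule is applied only
  when its conclusion is a sequent (Thm is a set of sequents).\<close>
inductive_set Thm for phi fr TD FD PD
  and T :: "(('v,'f,'t) ctx \<times> ('v,'f,'t,'p) fm \<times> ('v,'f,'t,'p) fm) set" where
  ax: "s \<in> T \<Longrightarrow> s \<in> Thm phi fr TD FD PD T"
| refl: "(G, \<phi>) \<in> Form phi TD FD PD \<Longrightarrow> (G, \<phi>, \<phi>) \<in> Thm phi fr TD FD PD T"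
| cut: "(G, \<phi>, \<theta>) \<in> Thm phi fr TD FD PD T \<Longrightarrow> (G, \<theta>, \<psi>) \<in> Thm phi fr TD FD PD T
        \<Longrightarrow> (G, \<phi>, \<psi>) \<in> Thm phi fr TD FD PD T"
| conjE1: "(G, FConj \<theta> \<psi>) \<in> Form phi TD FD PD \<Longrightarrow> (G, \<theta>) \<in> Form phi TD FD PD
        \<Longrightarrow> (G, FConj \<theta> \<psi>, \<theta>) \<in> Thm phi fr TD FD PD T"
| conjE2: "(G, FConj \<theta> \<psi>) \<in> Form phi TD FD PD \<Longrightarrow> (G, \<psi>) \<in> Form phi TD FD PD
        \<Longrightarrow> (G, FConj \<theta> \<psi>, \<psi>) \<in> Thm phi fr TD FD PD T"
| conjI: "(G, \<phi>, \<theta>) \<in> Thm phi fr TD FD PD T \<Longrightarrow> (G, \<phi>, \<psi>) \<in> Thm phi fr TD FD PD T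
        \<Longrightarrow> (G, \<phi>, FConj \<theta> \<psi>) \<in> Thm phi fr TD FD PD T"
| topI: "(G, \<phi>) \<in> Form phi TD FD PD \<Longrightarrow> (G, FTop) \<in> Form phi TD FD PD
        \<Longrightarrow> (G, \<phi>, FTop) \<in> Thm phi fr TD FD PD T"
| disjI1: "(G, \<theta>) \<in> Form phi TD FD PD \<Longrightarrow> (G, FDisj \<theta> \<psi>) \<in> Form phi TD FD PD
        \<Longrightarrow> (G, \<theta>, FDisj \<theta> \<psi>) \<in> Thm phi fr TD FD PD T"
| disjI2: "(G, \<psi>) \<in> Form phi TD FD PD \<Longrightarrow> (G, FDisj \<theta> \<psi>) \<in> Form phi TD FD PD
        \<Longrightarrow> (G, \<psi>, FDisj \<theta> \<psi>) \<in> Thm phi fr TD FD PD T"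
| disjE: "(G, \<theta>, \<phi>) \<in> Thm phi fr TD FD PD T \<Longrightarrow> (G, \<psi>, \<phi>) \<in> Thm phi fr TD FD PD T
        \<Longrightarrow> (G, FDisj \<theta> \<psi>, \<phi>) \<in> Thm phi fr TD FD PD T"
| botE: "(G, FBot) \<in> Form phi TD FD PD \<Longrightarrow> (G, \<phi>) \<in> Form phi TD FD PD
        \<Longrightarrow> (G, FBot, \<phi>) \<in> Thm phi fr TD FD PD T"
| impI: "(G, FConj \<theta> \<psi>, \<phi>) \<in> Thm phi fr TD FD PD T \<Longrightarrow>
        (G, \<theta>) \<in> Form phi TD FD PD \<Longrightarrow> (G, FImp \<psi> \<phi>) \<in> Form phi TD FD PD
        \<Longrightarrow> (G, \<theta>, FImp \<psi> \<phi>) \<in> Thm phi fr TD FD PD T"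
| impE: "(G, \<theta>, FImp \<psi> \<phi>) \<in> Thm phi fr TD FD PD T \<Longrightarrow>
        (G, FConj \<theta> \<psi>) \<in> Form phi TD FD PD \<Longrightarrow> (G, \<phi>) \<in> Form phi TD FD PD
        \<Longrightarrow> (G, FConj \<theta> \<psi>, \<phi>) \<in> Thm phi fr TD FD PD T"
| allI: "(G @ [(x, A)], fsub_p fr G x A \<phi>, \<psi>) \<in> Thm phi fr TD FD PD T \<Longrightarrow>
        (G, \<phi>) \<in> Form phi TD FD PD \<Longrightarrow> (G, FAll x A \<psi>) \<in> Form phi TD FD PD
        \<Longrightarrow> (G, \<phi>, FAll x A \<psi>) \<in> Thm phi fr TD FD PD T"
| allE: "(G, \<phi>, FAll x A \<psi>) \<in> Thm phi fr TD FD PD T \<Longrightarrow>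
        (G @ [(x, A)], fsub_p fr G x A \<phi>) \<in> Form phi TD FD PD \<Longrightarrow> (G @ [(x, A)], \<psi>) \<in> Form phi TD FD PD
        \<Longrightarrow> (G @ [(x, A)], fsub_p fr G x A \<phi>, \<psi>) \<in> Thm phi fr TD FD PD T"
| exE: "(G @ [(x, A)], \<psi>, fsub_p fr G x A \<phi>) \<in> Thm phi fr TD FD PD T \<Longrightarrow>
        (G, FEx x A \<psi>) \<in> Form phi TD FD PD \<Longrightarrow> (G, \<phi>) \<in> Form phi TD FD PD
        \<Longrightarrow> (G, FEx x A \<psi>, \<phi>) \<in> Thm phi fr TD FD PD T"
| exI: "(G, FEx x A \<psi>, \<phi>) \<in> Thm phi fr TD FD PD T \<Longrightarrow>
        (G @ [(x, A)], \<psi>) \<in> Form phi TD FD PD \<Longrightarrow> (G @ [(x, A)], fsub_p fr G x A \<phi>) \<in> Form phi TD FD PD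
        \<Longrightarrow> (G @ [(x, A)], \<psi>, fsub_p fr G x A \<phi>) \<in> Thm phi fr TD FD PD T"
| subst: "(G, \<phi>, \<psi>) \<in> Thm phi fr TD FD PD T \<Longrightarrow> morJ phi TD FD D G as \<Longrightarrow>
        (D, fsub fr D G as \<phi>) \<in> Form phi TD FD PD \<Longrightarrow> (D, fsub fr D G as \<psi>) \<in> Form phi TD FD PD
        \<Longrightarrow> (D, fsub fr D G as \<phi>, fsub fr D G as \<psi>) \<in> Thm phi fr TD FD PD T"

section \<open>The term-model cwf F_\<Sigma> and the Lindenbaum--Tarski structure\<close>

type_synonym ('v,'f,'t) mor = "('v,'f,'t) ctx \<times> ('v,'f,'t) ctx \<times> ('v,'f) trm list"
type_synonym ('v,'f,'t) ty = "('v,'f,'t) ctx \<times> ('v,'f,'t) pty"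
type_synonym ('v,'f,'t) tm = "('v,'f,'t) ty \<times> ('v,'f) trm"

definition fresh :: "('v set \<Rightarrow> 'v) \<Rightarrow> ('v,'f,'t) ctx \<Rightarrow> 'v" where
  "fresh fr G = fr (vars_ctx G)"

definition ctx_ext :: "('v set \<Rightarrow> 'v) \<Rightarrow> ('v,'f,'t) ty \<Rightarrow> ('v,'f,'t) ctx" where
  "ctx_ext fr A = (case A of (G, S) \<Rightarrow> G @ [(fresh fr G, S)])"

definition FSigma ::
  "('v set \<Rightarrow> 'v set) \<Rightarrow> ('v set \<Rightarrow> 'v) \<Rightarrow> ('t \<Rightarrow> (('v,'f,'t) ctx \<times> nat list) option)
   \<Rightarrow> ('f \<Rightarrow> (('v,'f,'t) ctx \<times> nat list \<times> ('v,'f,'t) pty) option)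
   \<Rightarrow> (('v,'f,'t) ctx, ('v,'f,'t) mor, ('v,'f,'t) ty, ('v,'f,'t) tm) cwf_ops" where
  "FSigma phi fr TD FD = \<lparr>
     Ob = {G. IsCtx G \<in> J phi TD FD},
     Hom = (\<lambda>D G. {(D, G, as) | as. morJ phi TD FD D G as}),
     comp = (\<lambda>g f. case f of (D, G, as) \<Rightarrow> case g of (_, E, bs) \<Rightarrow>
                (D, E, map (subst_trm (smap (OV G) as)) bs)),
     ident = (\<lambda>G. (G, G, map Var (OV G))),
     termo = [],
     Ty = (\<lambda>G. {(G, A) | A. IsType G A \<in> J phi TD FD}),
     tsub = (\<lambda>A f. case A of (_, B) \<Rightarrow> case f of (D, G, as) \<Rightarrow>
                (D, subst_typ (smap (OV G) as) B)),
     ext = (\<lambda>_ A. ctx_ext fr A),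
     pp = (\<lambda>_ A. (ctx_ext fr A, fst A, map Var (OV (fst A)))),
     Tm = (\<lambda>G A. {(A, a) | a. fst A = G \<and> HasType G a (snd A) \<in> J phi TD FD}),
     msub = (\<lambda>a f. case a of ((_, B), t) \<Rightarrow> case f of (D, G, as) \<Rightarrow>
                ((D, subst_typ (smap (OV G) as) B), subst_trm (smap (OV G) as) t)),
     vv = (\<lambda>_ A. ((ctx_ext fr A, snd A), Var (fresh fr (fst A)))),
     pair = (\<lambda>_ A f a. case f of (D, _, ss) \<Rightarrow> (D, ctx_ext fr A, ss @ [snd a]))
   \<rparr>"

definition LT ::
  "('v set \<Rightarrow> 'v set) \<Rightarrow> ('v set \<Rightarrow> 'v) \<Rightarrow> ('t \<Rightarrow> (('v,'f,'t) ctx \<times> nat list) option)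
   \<Rightarrow> ('f \<Rightarrow> (('v,'f,'t) ctx \<times> nat list \<times> ('v,'f,'t) pty) option)
   \<Rightarrow> ('p \<Rightarrow> (('v,'f,'t) ctx \<times> nat list) option)
   \<Rightarrow> (('v,'f,'t) ctx \<times> ('v,'f,'t,'p) fm \<times> ('v,'f,'t,'p) fm) set
   \<Rightarrow> (('v,'f,'t) ctx, ('v,'f,'t) mor, ('v,'f,'t) ty, ('v,'f,'t) ctx \<times> ('v,'f,'t,'p) fm) hdoc_ops" where
  "LT phi fr TD FD PD T = \<lparr>
     Pr = (\<lambda>G. {(G, \<phi>) | \<phi>. (G, \<phi>) \<in> Form phi TD FD PD}),
     hle = (\<lambda>_ P Q. (fst P, snd P, snd Q) \<in> Thm phi fr TD FD PD T),
     htop = (\<lambda>G. (G, FTop)),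
     hbot = (\<lambda>G. (G, FBot)),
     hand = (\<lambda>_ P Q. (fst P, FConj (snd P) (snd Q))),
     hor = (\<lambda>_ P Q. (fst P, FDisj (snd P) (snd Q))),
     himp = (\<lambda>_ P Q. (fst P, FImp (snd P) (snd Q))),
     prsub = (\<lambda>f P. case f of (D, G, as) \<Rightarrow> (D, fsub fr D G as (snd P))),
     hall = (\<lambda>_ A R. (fst A, FAll (fst (last (fst R))) (snd A) (snd R))),
     hex = (\<lambda>_ A R. (fst A, FEx (fst (last (fst R))) (snd A) (snd R)))
   \<rparr>"

end

theory Submission
  imports Defs
begin


lemma smap_Var[simp]: "smap xs (map Var xs) y = Var y"
  unfolding smap_def by (induction xs) auto

lemma subst_trm_Var_id[simp]: "subst_trm Var t = t"
  by (induction t) (auto simp: map_idI)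

lemma subst_trm_Var_fun[simp]: "subst_trm Var = id"
  by (rule ext) simp

lemma subst_typ_Var_id[simp]: "subst_typ Var A = A"
  by (cases A) auto

lemma smap_Var_fun[simp]: "smap xs (map Var xs) = Var"
  by (rule ext) simp

lemma smap_map: "length xs = length as \<Longrightarrow> y \<in> set xs \<Longrightarrow> smap xs (map f as) y = f (smap xs as y)"
  unfolding smap_def
proof (induction xs arbitrary: as)
  case (Cons x xs) then show ?case by (cases as) auto
qed simp

lemma smap_take: "length xs = length as \<Longrightarrow> y \<in> set (take k xs) \<Longrightarrow>
   smap (take k xs) (take k as) y = smap xs as y"
  unfolding smap_def
proof (induction xs arbitrary: as k)
  case (Cons x xs) then show ?case by (cases as; cases k) auto
qed simp

lemma smap_app: "length xs = length as \<Longrightarrow> y \<in> set xs \<Longrightarrow> smap (xs @ ys) (as @ bs) y = smap xs as y"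
  unfolding smap_def
proof (induction xs arbitrary: as)
  case (Cons x xs) then show ?case by (cases as) auto
qed simp

lemma smap_snoc_new: "length xs = length as \<Longrightarrow> y \<notin> set xs \<Longrightarrow> smap (xs @ [y]) (as @ [a]) y = a"
  unfolding smap_def
proof (induction xs arbitrary: as)
  case (Cons x xs) then show ?case by (cases as) auto
qed simp

lemma smap_nth: "distinct xs \<Longrightarrow> length xs = length as \<Longrightarrow> i < length xs \<Longrightarrow> smap xs as (xs ! i) = as ! i"
  unfolding smap_def by (simp add: map_of_zip_nth)

lemma subst_trm_comp: "subst_trm s (subst_trm t u) = subst_trm (\<lambda>x. subst_trm s (t x)) u"
  by (induction u) auto

lemma subst_typ_comp: "subst_typ s (subst_typ t A) = subst_typ (\<lambda>x. subst_trm s (t x)) A"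
  by (cases A) (auto simp: subst_trm_comp)

lemma subst_trm_cong: "(\<And>x. x \<in> vars_trm u \<Longrightarrow> s x = t x) \<Longrightarrow> subst_trm s u = subst_trm t u"
  by (induction u) auto

lemma subst_typ_cong: "(\<And>x. x \<in> vars_typ A \<Longrightarrow> s x = t x) \<Longrightarrow> subst_typ s A = subst_typ t A"
  by (cases A) (auto intro: subst_trm_cong)

lemma finite_vars_trm[simp]: "finite (vars_trm t)"
  by (induction t) auto

lemma finite_vars_typ[simp]: "finite (vars_typ A)"
  by (cases A) auto

lemma finite_vars_ctx[simp]: "finite (vars_ctx G)"
  by (auto simp: vars_ctx_def OV_def)

lemma OV_sub_vars_ctx: "set (OV G) \<subseteq> vars_ctx G"
  by (auto simp: vars_ctx_def)

lemma subst_trm_smap_comp: "vars_trm u \<subseteq> set xs \<Longrightarrow> length xs = length as \<Longrightarrow>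
  subst_trm s (subst_trm (smap xs as) u) = subst_trm (smap xs (map (subst_trm s) as)) u"
  by (auto simp: subst_trm_comp smap_map intro!: subst_trm_cong)

lemma subst_typ_smap_comp: "vars_typ A \<subseteq> set xs \<Longrightarrow> length xs = length as \<Longrightarrow>
  subst_typ s (subst_typ (smap xs as) A) = subst_typ (smap xs (map (subst_trm s) as)) A"
  by (auto simp: subst_typ_comp smap_map intro!: subst_typ_cong)

lemma OV_append[simp]: "OV (G @ H) = OV G @ OV H" by (simp add: OV_def)
lemma OV_Cons[simp]: "OV (p # H) = fst p # OV H" by (simp add: OV_def)
lemma OV_Nil[simp]: "OV [] = []" by (simp add: OV_def)
lemma length_OV[simp]: "length (OV G) = length G" by (simp add: OV_def)
lemma nth_OV[simp]: "i < length G \<Longrightarrow> OV G ! i = fst (G ! i)" by (simp add: OV_def)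



fun jctx :: "('v,'f,'t) judg \<Rightarrow> ('v,'f,'t) ctx" where
  "jctx (IsCtx G) = G" | "jctx (IsType G A) = G" | "jctx (HasType G t A) = G"

fun jsub :: "('v,'f,'t) ctx \<Rightarrow> ('v,'f) trm list \<Rightarrow> ('v,'f,'t) judg \<Rightarrow> ('v,'f,'t) judg" where
  "jsub D as (IsCtx G) = IsCtx D"
| "jsub D as (IsType G A) = IsType D (subst_typ (smap (OV G) as) A)"
| "jsub D as (HasType G t A) = HasType D (subst_trm (smap (OV G) as) t) (subst_typ (smap (OV G) as) A)"

fun jwf :: "('v,'f,'t) judg \<Rightarrow> bool" where
  "jwf (IsCtx G) = (distinct (OV G) \<and> (\<forall>i<length G. vars_typ (snd (G!i)) \<subseteq> set (take i (OV G))))"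
| "jwf (IsType G A) = (vars_typ A \<subseteq> set (OV G))"
| "jwf (HasType G t A) = (vars_trm t \<subseteq> set (OV G) \<and> vars_typ A \<subseteq> set (OV G))"

lemma J_ctx: "j \<in> J phi TD FD \<Longrightarrow> IsCtx (jctx j) \<in> J phi TD FD"
  by (induction rule: J.induct) (auto intro: J.intros)

lemma IsCtx_snoc: "IsCtx (G @ [(x,A)]) \<in> J phi TD FD \<Longrightarrow>
   IsCtx G \<in> J phi TD FD \<and> IsType G A \<in> J phi TD FD \<and> x \<in> phi (vars_ctx G)"
  by (erule J.cases) auto

lemma vars_sel: "\<forall>i\<in>set is. i < length as \<Longrightarrow> (\<forall>k<length as. vars_trm (as ! k) \<subseteq> X) \<Longrightarrow>
   (\<Union>t\<in>set (sel as is). vars_trm t) \<subseteq> X"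
  by (auto simp: sel_def)

lemma map_sel: "\<forall>i\<in>set is. i < length as \<Longrightarrow> map f (sel as is) = sel (map f as) is"
  by (auto simp: sel_def)

lemma J_wf:
  assumes VS: "var_system phi fr" and SIG: "is_signature phi TD FD"
  shows "j \<in> J phi TD FD \<Longrightarrow> jwf j"
proof (induction rule: J.induct)
  case R1 then show ?case by simp
next
  case (R2 G A x)
  have "phi (vars_ctx G) \<subseteq> - vars_ctx G" using VS by (simp add: var_system_def)
  then have "x \<notin> vars_ctx G" using R2 by blast
  then have xn: "x \<notin> set (OV G)" using OV_sub_vars_ctx[of G] by blast
  have d: "distinct (OV (G @ [(x, A)]))" using R2 xn by simp
  have v: "\<forall>i<length (G @ [(x, A)]). vars_typ (snd ((G @ [(x, A)]) ! i)) \<subseteq> set (take i (OV (G @ [(x, A)])))"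
  proof (intro HOL.allI HOL.impI)
    fix i assume i: "i < length (G @ [(x, A)])"
    show "vars_typ (snd ((G @ [(x, A)]) ! i)) \<subseteq> set (take i (OV (G @ [(x, A)])))"
    proof (cases "i < length G")
      case True then show ?thesis using R2 by (simp add: nth_append)
    next
      case False then have "i = length G" using i by simp
      then show ?thesis using R2 by simp
    qed
  qed
  show ?case using d v by (simp only: jwf.simps)
next
  case (R3 G i)
  then show ?case using set_take_subset[of i "OV G"] 
    by (auto simp: OV_def)
next
  case (R4 S G "is" D as)
  have "determining G is" using SIG R4.hyps(1) by (auto simp: is_signature_def)
  then have "\<forall>i\<in>set is. i < length as" using R4.hyps(4) by (auto simp: determining_def)
  moreover have "\<forall>k<length as. vars_trm (as ! k) \<subseteq> set (OV D)" using R4 by auto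
  ultimately show ?case by (simp add: vars_sel)
next
  case (R5 f G "is" U D as)
  have "determining G is" using SIG R5.hyps(1) by (auto simp: is_signature_def)
  then have "\<forall>i\<in>set is. i < length as" using R5.hyps(4) by (auto simp: determining_def)
  moreover have "\<forall>k<length as. vars_trm (as ! k) \<subseteq> set (OV D)" using R5 by auto
  ultimately show ?case using R5.IH(4) by (simp add: vars_sel)
qed

lemma IsCtx_wf: "var_system phi fr \<Longrightarrow> is_signature phi TD FD \<Longrightarrow> IsCtx G \<in> J phi TD FD \<Longrightarrow>
  distinct (OV G) \<and> (\<forall>i<length G. vars_typ (snd (G!i)) \<subseteq> set (take i (OV G)))"
  using J_wf by fastforce

lemma IsType_wf: "var_system phi fr \<Longrightarrow> is_signature phi TD FD \<Longrightarrow> IsType G A \<in> J phi TD FD \<Longrightarrow>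
  vars_typ A \<subseteq> set (OV G)"
  using J_wf by fastforce

lemma HasType_wf: "var_system phi fr \<Longrightarrow> is_signature phi TD FD \<Longrightarrow> HasType G t A \<in> J phi TD FD \<Longrightarrow>
  vars_trm t \<subseteq> set (OV G) \<and> vars_typ A \<subseteq> set (OV G)"
  using J_wf by fastforce

lemma J_subst:
  assumes VS: "var_system phi fr" and SIG: "is_signature phi TD FD"
  shows "j \<in> J phi TD FD \<Longrightarrow> morJ phi TD FD D (jctx j) as \<Longrightarrow> jsub D as j \<in> J phi TD FD"
proof (induction arbitrary: D as rule: J.induct)
  case R1 then show ?case by (simp add: morJ_def)
next
  case (R2 G A x) then show ?case by (simp add: morJ_def)
next
  case (R3 G i D as)
  have m: "length as = length G" "HasType D (as ! i) (subst_typ (smap (take i (OV G)) (take i as)) (snd (G ! i))) \<in> J phi TD FD"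
    using R3 by (auto simp: morJ_def)
  have wf: "distinct (OV G)" "vars_typ (snd (G!i)) \<subseteq> set (take i (OV G))"
    using IsCtx_wf[OF VS SIG R3(1)] \<open>i < length G\<close> by auto
  have "subst_typ (smap (take i (OV G)) (take i as)) (snd (G ! i)) = subst_typ (smap (OV G) as) (snd (G ! i))"
  proof (rule subst_typ_cong)
    fix y assume "y \<in> vars_typ (snd (G ! i))"
    then have "y \<in> set (take i (OV G))" using wf(2) by blast
    then show "smap (take i (OV G)) (take i as) y = smap (OV G) as y" using m(1) by (simp add: smap_take)
  qed
  moreover have "smap (OV G) as (fst (G ! i)) = as ! i"
    using smap_nth[OF wf(1), of as i] m(1) \<open>i < length G\<close> by simp
  ultimately show ?case using m(2) by simp
next
  case (R4 S G "is" D0 bs D as)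
  let ?s = "subst_trm (smap (OV D0) as)"
  have "determining G is" using SIG R4.hyps(1) by (auto simp: is_signature_def)
  then have isl: "\<forall>i\<in>set is. i < length bs" using R4.hyps(4) by (auto simp: determining_def)
  have wfG: "\<forall>i<length G. vars_typ (snd (G!i)) \<subseteq> set (take i (OV G))"
    using IsCtx_wf[OF VS SIG R4.hyps(3)] by auto
  have "IsType D (TyApp S (sel (map ?s bs) is)) \<in> J phi TD FD"
  proof (rule J.R4[OF R4.hyps(1) _ R4.hyps(3)])
    show "IsCtx D \<in> J phi TD FD" using R4.prems by (simp add: morJ_def)
    show "length (map ?s bs) = length G" using R4.hyps(4) by simp
    show "\<forall>k<length G. HasType D (map ?s bs ! k)
          (subst_typ (smap (take k (OV G)) (take k (map ?s bs))) (snd (G ! k))) \<in> J phi TD FD"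
    proof (intro HOL.allI HOL.impI)
      fix k assume k: "k < length G"
      have "jsub D as (HasType D0 (bs ! k) (subst_typ (smap (take k (OV G)) (take k bs)) (snd (G ! k)))) \<in> J phi TD FD"
        using R4.IH(3) k R4.prems by auto
      moreover have "subst_typ (smap (OV D0) as) (subst_typ (smap (take k (OV G)) (take k bs)) (snd (G ! k)))
          = subst_typ (smap (take k (OV G)) (take k (map ?s bs))) (snd (G ! k))"
        using subst_typ_smap_comp[of "snd (G ! k)" "take k (OV G)" "take k bs"] wfG k R4.hyps(4)
        by (simp add: take_map)
      ultimately show "HasType D (map ?s bs ! k)
          (subst_typ (smap (take k (OV G)) (take k (map ?s bs))) (snd (G ! k))) \<in> J phi TD FD"
        using k R4.hyps(4) by simp
    qed
  qed
  then show ?case using isl by (simp add: map_sel)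
next
  case (R5 f G "is" U D0 bs D as)
  let ?s = "subst_trm (smap (OV D0) as)"
  have "determining G is" using SIG R5.hyps(1) by (auto simp: is_signature_def)
  then have isl: "\<forall>i\<in>set is. i < length bs" using R5.hyps(4) by (auto simp: determining_def)
  have wfG: "\<forall>i<length G. vars_typ (snd (G!i)) \<subseteq> set (take i (OV G))"
    using IsCtx_wf[OF VS SIG R5.hyps(3)] by auto
  have "IsType G U \<in> J phi TD FD" using SIG R5.hyps(1) by (auto simp: is_signature_def)
  then have wfU: "vars_typ U \<subseteq> set (OV G)" using IsType_wf[OF VS SIG] by blast
  have Ueq: "subst_typ (smap (OV D0) as) (subst_typ (smap (OV G) bs) U) = subst_typ (smap (OV G) (map ?s bs)) U"
    using subst_typ_smap_comp[OF wfU] R5.hyps(4) by simp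
  have "HasType D (App f (sel (map ?s bs) is)) (subst_typ (smap (OV G) (map ?s bs)) U) \<in> J phi TD FD"
  proof (rule J.R5[OF R5.hyps(1) _ R5.hyps(3)])
    show "IsCtx D \<in> J phi TD FD" using R5.prems by (simp add: morJ_def)
    show "length (map ?s bs) = length G" using R5.hyps(4) by simp
    show "IsType D (subst_typ (smap (OV G) (map ?s bs)) U) \<in> J phi TD FD"
    proof -
      have "jsub D as (IsType D0 (subst_typ (smap (OV G) bs) U)) \<in> J phi TD FD"
        using R5.IH(4) R5.prems by simp
      then show ?thesis using Ueq by simp
    qed
    show "\<forall>k<length G. HasType D (map ?s bs ! k)
          (subst_typ (smap (take k (OV G)) (take k (map ?s bs))) (snd (G ! k))) \<in> J phi TD FD"
    proof (intro HOL.allI HOL.impI)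
      fix k assume k: "k < length G"
      have "jsub D as (HasType D0 (bs ! k) (subst_typ (smap (take k (OV G)) (take k bs)) (snd (G ! k)))) \<in> J phi TD FD"
        using R5.IH(3) k R5.prems by auto
      moreover have "subst_typ (smap (OV D0) as) (subst_typ (smap (take k (OV G)) (take k bs)) (snd (G ! k)))
          = subst_typ (smap (take k (OV G)) (take k (map ?s bs))) (snd (G ! k))"
        using subst_typ_smap_comp[of "snd (G ! k)" "take k (OV G)" "take k bs"] wfG k R5.hyps(4)
        by (simp add: take_map)
      ultimately show "HasType D (map ?s bs ! k)
          (subst_typ (smap (take k (OV G)) (take k (map ?s bs))) (snd (G ! k))) \<in> J phi TD FD"
        using k R5.hyps(4) by simp
    qed
  qed
  then show ?case using isl Ueq by (simp add: map_sel)
qed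



lemma var_fresh:
  assumes "var_system phi fr" shows "fr (vars_ctx D) \<in> phi (vars_ctx D)" "phi (vars_ctx D) \<subseteq> - vars_ctx D"
  using assms by (auto simp: var_system_def)

lemma fresh_notin_OV:
  assumes "var_system phi fr" "y \<in> phi (vars_ctx D)" shows "y \<notin> set (OV D)"
  using assms var_fresh(2)[OF assms(1), of D] OV_sub_vars_ctx[of D] by blast

lemma morJ_HasType:
  assumes VS: "var_system phi fr" and SIG: "is_signature phi TD FD"
    and m: "morJ phi TD FD D G as" and k: "k < length G"
  shows "HasType D (as ! k) (subst_typ (smap (OV G) as) (snd (G ! k))) \<in> J phi TD FD"
proof -
  have G: "IsCtx G \<in> J phi TD FD" and l: "length as = length G"
    and h: "HasType D (as ! k) (subst_typ (smap (take k (OV G)) (take k as)) (snd (G ! k))) \<in> J phi TD FD"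
    using m k by (auto simp: morJ_def)
  have wf: "vars_typ (snd (G!k)) \<subseteq> set (take k (OV G))" using IsCtx_wf[OF VS SIG G] k by auto
  have "subst_typ (smap (take k (OV G)) (take k as)) (snd (G ! k)) = subst_typ (smap (OV G) as) (snd (G ! k))"
  proof (rule subst_typ_cong)
    fix y assume "y \<in> vars_typ (snd (G ! k))"
    then have "y \<in> set (take k (OV G))" using wf by blast
    then show "smap (take k (OV G)) (take k as) y = smap (OV G) as y" using l by (simp add: smap_take)
  qed
  then show ?thesis using h by simp
qed

lemma morJ_vars:
  assumes VS: "var_system phi fr" and SIG: "is_signature phi TD FD"
    and m: "morJ phi TD FD D G as"
  shows "k < length as \<Longrightarrow> vars_trm (as ! k) \<subseteq> set (OV D)"
  using morJ_HasType[OF VS SIG m, of k] m HasType_wf[OF VS SIG] by (auto simp: morJ_def)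

lemma morJ_vars_set:
  assumes VS: "var_system phi fr" and SIG: "is_signature phi TD FD"
    and m: "morJ phi TD FD D G as"
  shows "a \<in> set as \<Longrightarrow> vars_trm a \<subseteq> set (OV D)"
  using morJ_vars[OF VS SIG m] by (auto simp: in_set_conv_nth)

lemma morJ_comp:
  assumes VS: "var_system phi fr" and SIG: "is_signature phi TD FD"
    and m1: "morJ phi TD FD D G as" and m2: "morJ phi TD FD G E bs"
  shows "morJ phi TD FD D E (map (subst_trm (smap (OV G) as)) bs)"
proof -
  let ?s = "subst_trm (smap (OV G) as)"
  have E: "IsCtx E \<in> J phi TD FD" and l: "length bs = length E" using m2 by (auto simp: morJ_def)
  have wfE: "\<forall>i<length E. vars_typ (snd (E!i)) \<subseteq> set (take i (OV E))"
    using IsCtx_wf[OF VS SIG E] by auto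
  show ?thesis unfolding morJ_def
  proof (intro HOL.conjI HOL.allI HOL.impI)
    show "IsCtx D \<in> J phi TD FD" using m1 by (simp add: morJ_def)
    show "IsCtx E \<in> J phi TD FD" by fact
    show "length (map ?s bs) = length E" using l by simp
    fix k assume k: "k < length E"
    have "jsub D as (HasType G (bs ! k) (subst_typ (smap (take k (OV E)) (take k bs)) (snd (E ! k)))) \<in> J phi TD FD"
      using m2 k m1 by (intro J_subst[OF VS SIG]) (auto simp: morJ_def)
    moreover have "subst_typ (smap (OV G) as) (subst_typ (smap (take k (OV E)) (take k bs)) (snd (E ! k)))
          = subst_typ (smap (take k (OV E)) (take k (map ?s bs))) (snd (E ! k))"
      using subst_typ_smap_comp[of "snd (E ! k)" "take k (OV E)" "take k bs"] wfE k l
      by (simp add: take_map)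
    ultimately show "HasType D (map ?s bs ! k)
          (subst_typ (smap (take k (OV E)) (take k (map ?s bs))) (snd (E ! k))) \<in> J phi TD FD"
      using k l by simp
  qed
qed

lemma morJ_id:
  assumes G: "IsCtx G \<in> J phi TD FD"
  shows "morJ phi TD FD G G (map Var (OV G))"
  unfolding morJ_def
proof (intro HOL.conjI HOL.allI HOL.impI)
  fix k assume k: "k < length G"
  have "HasType G (Var (fst (G ! k))) (snd (G ! k)) \<in> J phi TD FD" using J.R3[OF G k] .
  then show "HasType G (map Var (OV G) ! k)
          (subst_typ (smap (take k (OV G)) (take k (map Var (OV G)))) (snd (G ! k))) \<in> J phi TD FD"
    using k by (simp add: take_map) 
qed (use G in auto)

lemma morJ_proj:
  assumes G: "IsCtx (G @ [(y, B)]) \<in> J phi TD FD"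
  shows "morJ phi TD FD (G @ [(y, B)]) G (map Var (OV G))"
  unfolding morJ_def
proof (intro HOL.conjI HOL.allI HOL.impI)
  fix k assume k: "k < length G"
  have "HasType (G @ [(y, B)]) (Var (fst ((G @ [(y, B)]) ! k))) (snd ((G @ [(y, B)]) ! k)) \<in> J phi TD FD"
    using J.R3[OF G, of k] k by simp
  then show "HasType (G @ [(y, B)]) (map Var (OV G) ! k)
          (subst_typ (smap (take k (OV G)) (take k (map Var (OV G)))) (snd (G ! k))) \<in> J phi TD FD"
    using k by (simp add: take_map nth_append) 
qed (use G IsCtx_snoc[OF G] in auto)

lemma morJ_weaken:
  assumes VS: "var_system phi fr" and SIG: "is_signature phi TD FD"
    and m: "morJ phi TD FD D G as" and D: "IsCtx (D @ [(y, B)]) \<in> J phi TD FD"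
  shows "morJ phi TD FD (D @ [(y, B)]) G as"
  using morJ_comp[OF VS SIG morJ_proj[OF D] m] by (simp add: map_idI)

lemma morJ_ext:
  assumes VS: "var_system phi fr" and SIG: "is_signature phi TD FD"
    and m: "morJ phi TD FD D G as" and GA: "IsCtx (G @ [(x, A)]) \<in> J phi TD FD"
    and y: "y \<in> phi (vars_ctx D)"
  shows "morJ phi TD FD (D @ [(y, subst_typ (smap (OV G) as) A)]) (G @ [(x, A)]) (as @ [Var y])"
proof -
  let ?A = "subst_typ (smap (OV G) as) A"
  have A: "IsType G A \<in> J phi TD FD" using IsCtx_snoc[OF GA] by auto
  have D: "IsCtx D \<in> J phi TD FD" and l: "length as = length G" using m by (auto simp: morJ_def)
  have A': "IsType D ?A \<in> J phi TD FD" using J_subst[OF VS SIG A, of D as] m by simp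
  have D': "IsCtx (D @ [(y, ?A)]) \<in> J phi TD FD" using J.R2[OF D A' y] .
  have mw: "morJ phi TD FD (D @ [(y, ?A)]) G as" using morJ_weaken[OF VS SIG m D'] .
  show ?thesis unfolding morJ_def
  proof (intro HOL.conjI HOL.allI HOL.impI)
    show "IsCtx (D @ [(y, ?A)]) \<in> J phi TD FD" by fact
    show "IsCtx (G @ [(x, A)]) \<in> J phi TD FD" by fact
    show "length (as @ [Var y]) = length (G @ [(x, A)])" using l by simp
    fix k assume k: "k < length (G @ [(x, A)])"
    show "HasType (D @ [(y, ?A)]) ((as @ [Var y]) ! k)
          (subst_typ (smap (take k (OV (G @ [(x, A)]))) (take k (as @ [Var y]))) (snd ((G @ [(x, A)]) ! k)))
         \<in> J phi TD FD"
    proof (cases "k < length G")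
      case True
      then show ?thesis using mw l by (simp add: morJ_def nth_append)
    next
      case False
      then have k: "k = length G" using k by simp
      have "HasType (D @ [(y, ?A)]) (Var (fst ((D @ [(y, ?A)]) ! length D))) (snd ((D @ [(y, ?A)]) ! length D)) \<in> J phi TD FD"
        using J.R3[OF D', of "length D"] by simp
      then show ?thesis using k l by (simp add: nth_append)
    qed
  qed
qed



lemma Form_ctx: "(G, \<phi>) \<in> Form phi TD FD PD \<Longrightarrow> IsCtx G \<in> J phi TD FD"
  by (induction rule: Form.induct) (auto simp: morJ_def dest: J_ctx)

lemma Form_subst:
  assumes VS: "var_system phi fr" and SIG: "is_signature phi TD FD"
    and PSIG: "is_pred_signature phi TD FD PD"
  shows "(G, \<phi>) \<in> Form phi TD FD PD \<Longrightarrow> morJ phi TD FD D G as \<Longrightarrow> (D, fsub fr D G as \<phi>) \<in> Form phi TD FD PD"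
proof (induction G \<phi> arbitrary: D as rule: Form.induct)
  case (atom R G0 "is" D0 cs D as)
  let ?s = "subst_trm (smap (OV D0) as)"
  have "determining G0 is" using PSIG atom.hyps(1) by (auto simp: is_pred_signature_def)
  then have isl: "\<forall>i\<in>set is. i < length cs" using atom.hyps(2) by (auto simp: determining_def morJ_def)
  have mc: "morJ phi TD FD D G0 (map ?s cs)" using morJ_comp[OF VS SIG atom.prems atom.hyps(2)] .
  have "(D, Atom R (sel (map ?s cs) is)) \<in> Form phi TD FD PD" using atom.hyps(1) mc by (rule Form.atom[where R=R and G=G0 and ?is="is"])
  then show ?case using isl by (simp add: map_sel)
next
  case (bot G D as) then show ?case by (auto simp: morJ_def intro: Form.bot)
next
  case (top G D as) then show ?case by (auto simp: morJ_def intro: Form.top)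
next
  case (conj G \<phi> \<psi> D as) then show ?case by (auto intro: Form.conj)
next
  case (disj G \<phi> \<psi> D as) then show ?case by (auto intro: Form.disj)
next
  case (imp G \<phi> \<psi> D as) then show ?case by (auto intro: Form.imp)
next
  case (all G x A \<theta> D as)
  let ?y = "fr (vars_ctx D)" and ?A = "subst_typ (smap (OV G) as) A"
  have GA: "IsCtx (G @ [(x, A)]) \<in> J phi TD FD" using Form_ctx[OF all.hyps(1)] .
  have m: "morJ phi TD FD (D @ [(?y, ?A)]) (G @ [(x, A)]) (as @ [Var ?y])"
    using morJ_ext[OF VS SIG all.prems GA var_fresh(1)[OF VS]] .
  have A': "IsType D ?A \<in> J phi TD FD" using J_subst[OF VS SIG all.hyps(2), of D as] all.prems by simp
  have "(D, FAll ?y ?A (fsub fr (D @ [(?y, ?A)]) (G @ [(x, A)]) (as @ [Var ?y]) \<theta>)) \<in> Form phi TD FD PD"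
    using all.IH[OF m] A' by (rule Form.all)
  then show ?case by (simp add: Let_def)
next
  case (ex G x A \<theta> D as)
  let ?y = "fr (vars_ctx D)" and ?A = "subst_typ (smap (OV G) as) A"
  have GA: "IsCtx (G @ [(x, A)]) \<in> J phi TD FD" using Form_ctx[OF ex.hyps(1)] .
  have m: "morJ phi TD FD (D @ [(?y, ?A)]) (G @ [(x, A)]) (as @ [Var ?y])"
    using morJ_ext[OF VS SIG ex.prems GA var_fresh(1)[OF VS]] .
  have A': "IsType D ?A \<in> J phi TD FD" using J_subst[OF VS SIG ex.hyps(2), of D as] ex.prems by simp
  have "(D, FEx ?y ?A (fsub fr (D @ [(?y, ?A)]) (G @ [(x, A)]) (as @ [Var ?y]) \<theta>)) \<in> Form phi TD FD PD"
    using ex.IH[OF m] A' by (rule Form.ex)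
  then show ?case by (simp add: Let_def)
qed

lemma Form_id:
  assumes VS: "var_system phi fr" and DB: "de_bruijn phi fr"
  shows "(G, \<phi>) \<in> Form phi TD FD PD \<Longrightarrow> fsub fr G G (map Var (OV G)) \<phi> = \<phi>"
proof (induction G \<phi> rule: Form.induct)
  case (all G x A \<theta>)
  have "x \<in> phi (vars_ctx G)" using IsCtx_snoc[OF Form_ctx[OF all.hyps(1)]] by blast
  then have x: "x = fr (vars_ctx G)" using DB by (simp add: de_bruijn_def)
  show ?case using all.IH x by (simp add: Let_def)
next
  case (ex G x A \<theta>)
  have "x \<in> phi (vars_ctx G)" using IsCtx_snoc[OF Form_ctx[OF ex.hyps(1)]] by blast
  then have x: "x = fr (vars_ctx G)" using DB by (simp add: de_bruijn_def)
  show ?case using ex.IH x by (simp add: Let_def)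
qed (simp_all add: map_idI)

lemma map_snoc_subst:
  assumes VS: "var_system phi fr" and SIG: "is_signature phi TD FD"
    and m1: "morJ phi TD FD G E bs" and l: "length as = length G" and y: "y \<in> phi (vars_ctx G)"
  shows "map (subst_trm (smap (OV G @ [y]) (as @ [Var z]))) (bs @ [Var y])
       = map (subst_trm (smap (OV G) as)) bs @ [Var z]"
proof -
  have yn: "y \<notin> set (OV G)" using fresh_notin_OV[OF VS y] .
  have "subst_trm (smap (OV G @ [y]) (as @ [Var z])) b = subst_trm (smap (OV G) as) b" if b: "b \<in> set bs" for b
  proof (rule subst_trm_cong)
    fix v assume "v \<in> vars_trm b"
    then have "v \<in> set (OV G)" using morJ_vars_set[OF VS SIG m1 b] by blast
    then show "smap (OV G @ [y]) (as @ [Var z]) v = smap (OV G) as v" using l by (simp add: smap_app)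
  qed
  moreover have "smap (OV G @ [y]) (as @ [Var z]) y = Var z" using smap_snoc_new[of "OV G" as y] l yn by simp
  ultimately show ?thesis by simp
qed

lemma Form_comp:
  assumes VS: "var_system phi fr" and SIG: "is_signature phi TD FD"
    and PSIG: "is_pred_signature phi TD FD PD"
  shows "(E, \<phi>) \<in> Form phi TD FD PD \<Longrightarrow> morJ phi TD FD G E bs \<Longrightarrow> morJ phi TD FD D G as \<Longrightarrow>
     fsub fr D E (map (subst_trm (smap (OV G) as)) bs) \<phi> = fsub fr D G as (fsub fr G E bs \<phi>)"
proof (induction E \<phi> arbitrary: D G as bs rule: Form.induct)
  case (atom R G0 "is" E0 cs D G as bs)
  have "determining G0 is" using PSIG atom.hyps(1) by (auto simp: is_pred_signature_def)
  then have isl: "\<forall>i\<in>set is. i < length cs" using atom.hyps(2) by (auto simp: determining_def morJ_def)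
  have lb: "length (OV E0) = length bs" using atom.prems(1) by (simp add: morJ_def)
  have "subst_trm (smap (OV G) as) (subst_trm (smap (OV E0) bs) t) = subst_trm (smap (OV E0) (map (subst_trm (smap (OV G) as)) bs)) t"
    if t: "t \<in> set (sel cs is)" for t
  proof -
    obtain i where i: "i \<in> set is" "t = cs ! i" using t by (auto simp: sel_def)
    have "vars_trm t \<subseteq> set (OV E0)" using morJ_vars[OF VS SIG atom.hyps(2)] i isl by blast
    then show ?thesis using subst_trm_smap_comp lb by blast
  qed
  then show ?case by simp
next
  case (all E x A \<theta> D G as bs)
  let ?s = "subst_trm (smap (OV G) as)"
  let ?y = "fr (vars_ctx G)" and ?z = "fr (vars_ctx D)" and ?A2 = "subst_typ (smap (OV E) bs) A"
  have lb: "length (OV E) = length bs" using all.prems(1) by (simp add: morJ_def)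
  have la: "length as = length G" using all.prems(2) by (simp add: morJ_def)
  have vA: "vars_typ A \<subseteq> set (OV E)" using IsType_wf[OF VS SIG all.hyps(2)] .
  have eqA: "subst_typ (smap (OV E) (map ?s bs)) A = subst_typ (smap (OV G) as) ?A2"
    using subst_typ_smap_comp[OF vA lb] by simp
  have EA: "IsCtx (E @ [(x, A)]) \<in> J phi TD FD" using Form_ctx[OF all.hyps(1)] .
  have m1: "morJ phi TD FD (G @ [(?y, ?A2)]) (E @ [(x, A)]) (bs @ [Var ?y])"
    using morJ_ext[OF VS SIG all.prems(1) EA var_fresh(1)[OF VS]] .
  have GA2: "IsCtx (G @ [(?y, ?A2)]) \<in> J phi TD FD" using m1 by (simp add: morJ_def)
  have m2: "morJ phi TD FD (D @ [(?z, subst_typ (smap (OV G) as) ?A2)]) (G @ [(?y, ?A2)]) (as @ [Var ?z])"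
    using morJ_ext[OF VS SIG all.prems(2) GA2 var_fresh(1)[OF VS]] by simp
  note IH = all.IH[OF m1 m2]
  have mapeq: "map (subst_trm (smap (OV (G @ [(?y, ?A2)])) (as @ [Var ?z]))) (bs @ [Var ?y]) = map ?s bs @ [Var ?z]"
    using map_snoc_subst[OF VS SIG all.prems(1) la var_fresh(1)[OF VS]] by simp
  show ?case using IH[unfolded mapeq] eqA by (simp add: Let_def)
next
  case (ex E x A \<theta> D G as bs)
  let ?s = "subst_trm (smap (OV G) as)"
  let ?y = "fr (vars_ctx G)" and ?z = "fr (vars_ctx D)" and ?A2 = "subst_typ (smap (OV E) bs) A"
  have lb: "length (OV E) = length bs" using ex.prems(1) by (simp add: morJ_def)
  have la: "length as = length G" using ex.prems(2) by (simp add: morJ_def)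
  have vA: "vars_typ A \<subseteq> set (OV E)" using IsType_wf[OF VS SIG ex.hyps(2)] .
  have eqA: "subst_typ (smap (OV E) (map ?s bs)) A = subst_typ (smap (OV G) as) ?A2"
    using subst_typ_smap_comp[OF vA lb] by simp
  have EA: "IsCtx (E @ [(x, A)]) \<in> J phi TD FD" using Form_ctx[OF ex.hyps(1)] .
  have m1: "morJ phi TD FD (G @ [(?y, ?A2)]) (E @ [(x, A)]) (bs @ [Var ?y])"
    using morJ_ext[OF VS SIG ex.prems(1) EA var_fresh(1)[OF VS]] .
  have GA2: "IsCtx (G @ [(?y, ?A2)]) \<in> J phi TD FD" using m1 by (simp add: morJ_def)
  have m2: "morJ phi TD FD (D @ [(?z, subst_typ (smap (OV G) as) ?A2)]) (G @ [(?y, ?A2)]) (as @ [Var ?z])"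
    using morJ_ext[OF VS SIG ex.prems(2) GA2 var_fresh(1)[OF VS]] by simp
  note IH = ex.IH[OF m1 m2]
  have mapeq: "map (subst_trm (smap (OV (G @ [(?y, ?A2)])) (as @ [Var ?z]))) (bs @ [Var ?y]) = map ?s bs @ [Var ?z]"
    using map_snoc_subst[OF VS SIG ex.prems(1) la var_fresh(1)[OF VS]] by simp
  show ?case using IH[unfolded mapeq] eqA by (simp add: Let_def)
qed simp_all



lemma map_smap_self: "distinct xs \<Longrightarrow> length xs = length as \<Longrightarrow> map (smap xs as) xs = as"
  by (rule nth_equalityI) (auto simp: smap_nth)

lemma subst_trm_o_Var[simp]: "subst_trm s \<circ> Var = s"
  by (rule ext) simp

lemma map_subst_Var: "map (subst_trm s) (map Var xs) = map s xs"
  by simp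

lemma morJ_snoc:
  assumes VS: "var_system phi fr" and SIG: "is_signature phi TD FD"
    and m: "morJ phi TD FD D G as" and GA: "IsCtx (G @ [(x, A)]) \<in> J phi TD FD"
    and t: "HasType D t (subst_typ (smap (OV G) as) A) \<in> J phi TD FD"
  shows "morJ phi TD FD D (G @ [(x, A)]) (as @ [t])"
  unfolding morJ_def
proof (intro HOL.conjI HOL.allI HOL.impI)
  show "IsCtx D \<in> J phi TD FD" using m by (simp add: morJ_def)
  show "IsCtx (G @ [(x, A)]) \<in> J phi TD FD" by fact
  show "length (as @ [t]) = length (G @ [(x, A)])" using m by (simp add: morJ_def)
  fix k assume k: "k < length (G @ [(x, A)])"
  show "HasType D ((as @ [t]) ! k)
          (subst_typ (smap (take k (OV (G @ [(x, A)]))) (take k (as @ [t]))) (snd ((G @ [(x, A)]) ! k)))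
         \<in> J phi TD FD"
  proof (cases "k < length G")
    case True
    then show ?thesis using m by (simp add: morJ_def nth_append)
  next
    case False
    then have "k = length G" using k by simp
    then show ?thesis using t m by (simp add: morJ_def nth_append)
  qed
qed

lemma IsType_subst: "var_system phi fr \<Longrightarrow> is_signature phi TD FD \<Longrightarrow> IsType G B \<in> J phi TD FD \<Longrightarrow>
  morJ phi TD FD D G as \<Longrightarrow> IsType D (subst_typ (smap (OV G) as) B) \<in> J phi TD FD"
  using J_subst[of phi fr TD FD "IsType G B" D as] by simp

lemma HasType_subst: "var_system phi fr \<Longrightarrow> is_signature phi TD FD \<Longrightarrow> HasType G t B \<in> J phi TD FD \<Longrightarrow>
  morJ phi TD FD D G as \<Longrightarrow> HasType D (subst_trm (smap (OV G) as) t) (subst_typ (smap (OV G) as) B) \<in> J phi TD FD"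
  using J_subst[of phi fr TD FD "HasType G t B" D as] by simp

context
  fixes phi :: "'v set \<Rightarrow> 'v set" and fr :: "'v set \<Rightarrow> 'v"
    and TD :: "'t \<Rightarrow> (('v,'f,'t) ctx \<times> nat list) option"
    and FD :: "'f \<Rightarrow> (('v,'f,'t) ctx \<times> nat list \<times> ('v,'f,'t) pty) option"
  assumes VS: "var_system phi fr" and SIG: "is_signature phi TD FD"
begin

abbreviation "CC \<equiv> FSigma phi fr TD FD"

lemma Ob_CC: "G \<in> Ob CC \<longleftrightarrow> IsCtx G \<in> J phi TD FD" by (simp add: FSigma_def)
lemma Hom_CC: "f \<in> Hom CC D G \<longleftrightarrow> (\<exists>as. f = (D, G, as) \<and> morJ phi TD FD D G as)" by (simp add: FSigma_def)
lemma Ty_CC: "A \<in> Ty CC G \<longleftrightarrow> (\<exists>B. A = (G, B) \<and> IsType G B \<in> J phi TD FD)" by (simp add: FSigma_def)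
lemma Tm_CC: "a \<in> Tm CC G A \<longleftrightarrow> (\<exists>t. a = (A, t) \<and> fst A = G \<and> HasType G t (snd A) \<in> J phi TD FD)"
  by (auto simp: FSigma_def)
lemma comp_CC: "comp CC (G', E, bs) (D, G, as) = (D, E, map (subst_trm (smap (OV G) as)) bs)"
  by (simp add: FSigma_def)
lemma ident_CC: "ident CC G = (G, G, map Var (OV G))" by (simp add: FSigma_def)
lemma termo_CC: "termo CC = []" by (simp add: FSigma_def)
lemma tsub_CC: "tsub CC (G', B) (D, G, as) = (D, subst_typ (smap (OV G) as) B)" by (simp add: FSigma_def)
lemma ext_CC: "ext CC G (G', B) = G' @ [(fr (vars_ctx G'), B)]" by (simp add: FSigma_def ctx_ext_def fresh_def)
lemma pp_CC: "pp CC G (G', B) = (G' @ [(fr (vars_ctx G'), B)], G', map Var (OV G'))"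
  by (simp add: FSigma_def ctx_ext_def fresh_def)
lemma msub_CC: "msub CC ((G', B), t) (D, G, as) = ((D, subst_typ (smap (OV G) as) B), subst_trm (smap (OV G) as) t)"
  by (simp add: FSigma_def)
lemma vv_CC: "vv CC G (G', B) = ((G' @ [(fr (vars_ctx G'), B)], B), Var (fr (vars_ctx G')))"
  by (simp add: FSigma_def ctx_ext_def fresh_def)
lemma pair_CC: "pair CC G (G', B) (D, G'', ss) a = (D, G' @ [(fr (vars_ctx G'), B)], ss @ [snd a])"
  by (simp add: FSigma_def ctx_ext_def fresh_def)

lemmas CC_simps = comp_CC ident_CC termo_CC tsub_CC ext_CC pp_CC msub_CC vv_CC pair_CC

lemma c1: "\<forall>G\<in>Ob CC. ident CC G \<in> Hom CC G G"
  by (auto simp: Ob_CC Hom_CC ident_CC intro: morJ_id)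

lemma c2: "\<forall>D\<in>Ob CC. \<forall>G\<in>Ob CC. \<forall>E\<in>Ob CC. \<forall>f\<in>Hom CC D G. \<forall>g\<in>Hom CC G E. comp CC g f \<in> Hom CC D E"
  by (auto simp: Hom_CC comp_CC intro: morJ_comp[OF VS SIG])

lemma c3: "\<forall>D\<in>Ob CC. \<forall>G\<in>Ob CC. \<forall>f\<in>Hom CC D G. comp CC (ident CC G) f = f \<and> comp CC f (ident CC D) = f"
proof (intro ballI)
  fix D G f assume "f \<in> Hom CC D G"
  then obtain as where f: "f = (D, G, as)" and m: "morJ phi TD FD D G as" by (auto simp: Hom_CC)
  have "distinct (OV G)" "length (OV G) = length as"
    using m IsCtx_wf[OF VS SIG] by (auto simp: morJ_def)
  then show "comp CC (ident CC G) f = f \<and> comp CC f (ident CC D) = f"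
    using f by (simp add: CC_simps map_smap_self map_idI)
qed

lemma map_subst_comp:
  "(\<forall>c\<in>set cs. vars_trm c \<subseteq> set xs) \<Longrightarrow> length xs = length bs \<Longrightarrow>
   map (subst_trm (smap xs (map (subst_trm s) bs))) cs = map (subst_trm s) (map (subst_trm (smap xs bs)) cs)"
  by (simp add: subst_trm_smap_comp)

lemma c4: "\<forall>A\<in>Ob CC. \<forall>B\<in>Ob CC. \<forall>D\<in>Ob CC. \<forall>E\<in>Ob CC. \<forall>f\<in>Hom CC A B. \<forall>g\<in>Hom CC B D. \<forall>h\<in>Hom CC D E.
         comp CC h (comp CC g f) = comp CC (comp CC h g) f"
proof (intro ballI)
  fix A B D E f g h assume "f \<in> Hom CC A B" "g \<in> Hom CC B D" "h \<in> Hom CC D E"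
  then obtain as bs cs where f: "f = (A, B, as)" and g: "g = (B, D, bs)" and h: "h = (D, E, cs)"
    and m2: "morJ phi TD FD B D bs" and m3: "morJ phi TD FD D E cs" by (auto simp: Hom_CC)
  have "\<forall>c\<in>set cs. vars_trm c \<subseteq> set (OV D)" using morJ_vars_set[OF VS SIG m3] by blast
  moreover have "length (OV D) = length bs" using m2 by (simp add: morJ_def)
  ultimately show "comp CC h (comp CC g f) = comp CC (comp CC h g) f"
    using f g h by (simp add: CC_simps map_subst_comp)
qed

lemma c5: "termo CC \<in> Ob CC \<and> (\<forall>G\<in>Ob CC. \<exists>!f. f \<in> Hom CC G (termo CC))"
  by (auto simp: Ob_CC Hom_CC termo_CC morJ_def intro: J.R1)

lemma c6: "\<forall>D\<in>Ob CC. \<forall>G\<in>Ob CC. \<forall>f\<in>Hom CC D G. \<forall>A\<in>Ty CC G. tsub CC A f \<in> Ty CC D"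
  by (auto simp: Hom_CC Ty_CC tsub_CC intro: IsType_subst[OF VS SIG])

lemma c7: "\<forall>G\<in>Ob CC. \<forall>A\<in>Ty CC G. tsub CC A (ident CC G) = A"
  by (auto simp: Ty_CC CC_simps)

lemma c8: "\<forall>D\<in>Ob CC. \<forall>G\<in>Ob CC. \<forall>E\<in>Ob CC. \<forall>f\<in>Hom CC D G. \<forall>g\<in>Hom CC G E. \<forall>A\<in>Ty CC E.
         tsub CC A (comp CC g f) = tsub CC (tsub CC A g) f"
proof (intro ballI)
  fix D G E f g A assume "f \<in> Hom CC D G" "g \<in> Hom CC G E" "A \<in> Ty CC E"
  then obtain as bs B where f: "f = (D, G, as)" and g: "g = (G, E, bs)" and A: "A = (E, B)"
    and m2: "morJ phi TD FD G E bs" and B: "IsType E B \<in> J phi TD FD" by (auto simp: Hom_CC Ty_CC)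
  have "vars_typ B \<subseteq> set (OV E)" using IsType_wf[OF VS SIG B] .
  moreover have "length (OV E) = length bs" using m2 by (simp add: morJ_def)
  ultimately show "tsub CC A (comp CC g f) = tsub CC (tsub CC A g) f"
    using f g A by (simp add: CC_simps subst_typ_smap_comp)
qed

lemma c9: "\<forall>D\<in>Ob CC. \<forall>G\<in>Ob CC. \<forall>f\<in>Hom CC D G. \<forall>A\<in>Ty CC G. \<forall>a\<in>Tm CC G A. msub CC a f \<in> Tm CC D (tsub CC A f)"
  by (auto simp: Hom_CC Ty_CC Tm_CC CC_simps intro: HasType_subst[OF VS SIG])

lemma c10: "\<forall>G\<in>Ob CC. \<forall>A\<in>Ty CC G. \<forall>a\<in>Tm CC G A. msub CC a (ident CC G) = a"
  by (auto simp: Ty_CC Tm_CC CC_simps)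

lemma c11: "\<forall>D\<in>Ob CC. \<forall>G\<in>Ob CC. \<forall>E\<in>Ob CC. \<forall>f\<in>Hom CC D G. \<forall>g\<in>Hom CC G E. \<forall>A\<in>Ty CC E. \<forall>a\<in>Tm CC E A.
         msub CC a (comp CC g f) = msub CC (msub CC a g) f"
proof (intro ballI)
  fix D G E f g A a assume "f \<in> Hom CC D G" "g \<in> Hom CC G E" "A \<in> Ty CC E" "a \<in> Tm CC E A"
  then obtain as bs B t where f: "f = (D, G, as)" and g: "g = (G, E, bs)" and A: "A = (E, B)" and a: "a = ((E, B), t)"
    and m2: "morJ phi TD FD G E bs" and t: "HasType E t B \<in> J phi TD FD" by (auto simp: Hom_CC Ty_CC Tm_CC)
  have "vars_typ B \<subseteq> set (OV E)" "vars_trm t \<subseteq> set (OV E)" using HasType_wf[OF VS SIG t] by auto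
  moreover have "length (OV E) = length bs" using m2 by (simp add: morJ_def)
  ultimately show "msub CC a (comp CC g f) = msub CC (msub CC a g) f"
    using f g a by (simp add: CC_simps subst_typ_smap_comp subst_trm_smap_comp)
qed

lemma c12: "\<forall>G\<in>Ob CC. \<forall>A\<in>Ty CC G.
         ext CC G A \<in> Ob CC \<and> pp CC G A \<in> Hom CC (ext CC G A) G \<and>
         vv CC G A \<in> Tm CC (ext CC G A) (tsub CC A (pp CC G A))"
proof (intro ballI)
  fix G A assume G: "G \<in> Ob CC" and "A \<in> Ty CC G"
  then obtain B where A: "A = (G, B)" and B: "IsType G B \<in> J phi TD FD" by (auto simp: Ty_CC)
  let ?x = "fr (vars_ctx G)"
  have GB: "IsCtx (G @ [(?x, B)]) \<in> J phi TD FD"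
    using J.R2[OF _ B var_fresh(1)[OF VS]] G by (simp add: Ob_CC)
  have "HasType (G @ [(?x, B)]) (Var (fst ((G @ [(?x, B)]) ! length G))) (snd ((G @ [(?x, B)]) ! length G)) \<in> J phi TD FD"
    using J.R3[OF GB, of "length G"] by simp
  then show "ext CC G A \<in> Ob CC \<and> pp CC G A \<in> Hom CC (ext CC G A) G \<and>
         vv CC G A \<in> Tm CC (ext CC G A) (tsub CC A (pp CC G A))"
    using GB morJ_proj[OF GB] A by (simp add: Ob_CC Hom_CC Tm_CC CC_simps)
qed

lemma c13: "\<forall>D\<in>Ob CC. \<forall>G\<in>Ob CC. \<forall>A\<in>Ty CC G. \<forall>f\<in>Hom CC D G. \<forall>a\<in>Tm CC D (tsub CC A f).
         pair CC G A f a \<in> Hom CC D (ext CC G A) \<and>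
         comp CC (pp CC G A) (pair CC G A f a) = f \<and>
         msub CC (vv CC G A) (pair CC G A f a) = a"
proof (intro ballI)
  fix D G A f a assume G: "G \<in> Ob CC" and "A \<in> Ty CC G" "f \<in> Hom CC D G" "a \<in> Tm CC D (tsub CC A f)"
  then obtain B ss t where A: "A = (G, B)" and B: "IsType G B \<in> J phi TD FD" and f: "f = (D, G, ss)"
    and m: "morJ phi TD FD D G ss" and a: "a = ((D, subst_typ (smap (OV G) ss) B), t)"
    and t: "HasType D t (subst_typ (smap (OV G) ss) B) \<in> J phi TD FD"
    by (auto simp: Ty_CC Hom_CC Tm_CC CC_simps)
  let ?x = "fr (vars_ctx G)"
  have GB: "IsCtx (G @ [(?x, B)]) \<in> J phi TD FD"
    using J.R2[OF _ B var_fresh(1)[OF VS]] G by (simp add: Ob_CC)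
  have m': "morJ phi TD FD D (G @ [(?x, B)]) (ss @ [t])" using morJ_snoc[OF VS SIG m GB t] .
  have dG: "distinct (OV G)" using IsCtx_wf[OF VS SIG] G by (simp add: Ob_CC)
  have l: "length (OV G) = length ss" using m by (simp add: morJ_def)
  have xn: "?x \<notin> set (OV G)" using fresh_notin_OV[OF VS var_fresh(1)[OF VS]] .
  have e1: "map (smap (OV G @ [?x]) (ss @ [t])) (OV G) = ss"
  proof -
    have "map (smap (OV G @ [?x]) (ss @ [t])) (OV G) = map (smap (OV G) ss) (OV G)"
      using l by (intro map_cong) (auto simp: smap_app)
    then show ?thesis using map_smap_self[OF dG l] by simp
  qed
  have e2: "subst_typ (smap (OV G @ [?x]) (ss @ [t])) B = subst_typ (smap (OV G) ss) B"
    using IsType_wf[OF VS SIG B] l by (intro subst_typ_cong) (auto simp: smap_app)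
  have e3: "smap (OV G @ [?x]) (ss @ [t]) ?x = t" using smap_snoc_new[OF l xn] .
  show "pair CC G A f a \<in> Hom CC D (ext CC G A) \<and>
         comp CC (pp CC G A) (pair CC G A f a) = f \<and>
         msub CC (vv CC G A) (pair CC G A f a) = a"
    using A f a m' e1 e2 e3 by (simp add: Hom_CC CC_simps)
qed

lemma c14: "\<forall>D\<in>Ob CC. \<forall>G\<in>Ob CC. \<forall>A\<in>Ty CC G. \<forall>h\<in>Hom CC D (ext CC G A).
         pair CC G A (comp CC (pp CC G A) h) (msub CC (vv CC G A) h) = h"
proof (intro ballI)
  fix D G A h assume G: "G \<in> Ob CC" and "A \<in> Ty CC G" and hh: "h \<in> Hom CC D (ext CC G A)"
  then obtain B where A: "A = (G, B)" by (auto simp: Ty_CC)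
  let ?x = "fr (vars_ctx G)"
  obtain hs where h: "h = (D, G @ [(?x, B)], hs)" and m: "morJ phi TD FD D (G @ [(?x, B)]) hs"
    using hh A by (auto simp: Hom_CC CC_simps)
  have d: "distinct (OV G @ [?x])" using IsCtx_wf[OF VS SIG, of "G @ [(?x, B)]"] m by (simp add: morJ_def)
  have l: "length (OV G @ [?x]) = length hs" using m by (simp add: morJ_def)
  have "map (smap (OV G @ [?x]) hs) (OV G @ [?x]) = hs" using map_smap_self[OF d l] .
  then show "pair CC G A (comp CC (pp CC G A) h) (msub CC (vv CC G A) h) = h"
    using A h by (simp add: CC_simps)
qed

lemma c15: "\<forall>E\<in>Ob CC. \<forall>D\<in>Ob CC. \<forall>G\<in>Ob CC. \<forall>A\<in>Ty CC G. \<forall>f\<in>Hom CC D G. \<forall>a\<in>Tm CC D (tsub CC A f).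
         \<forall>g\<in>Hom CC E D. comp CC (pair CC G A f a) g = pair CC G A (comp CC f g) (msub CC a g)"
  by (auto simp: Ty_CC Hom_CC Tm_CC CC_simps)

lemma cwf: "is_cwf CC"
  unfolding is_cwf_def
  using c1 c2 c3 c4 c5 c6 c7 c8 c9 c10 c11 c12 c13 c14 c15 by blast

end



context
  fixes phi :: "'v set \<Rightarrow> 'v set" and fr :: "'v set \<Rightarrow> 'v"
    and TD :: "'t \<Rightarrow> (('v,'f,'t) ctx \<times> nat list) option"
    and FD :: "'f \<Rightarrow> (('v,'f,'t) ctx \<times> nat list \<times> ('v,'f,'t) pty) option"
    and PD :: "'p \<Rightarrow> (('v,'f,'t) ctx \<times> nat list) option"
    and T :: "(('v,'f,'t) ctx \<times> ('v,'f,'t,'p) fm \<times> ('v,'f,'t,'p) fm) set"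
  assumes VS: "var_system phi fr" and DB: "de_bruijn phi fr" and SIG: "is_signature phi TD FD"
    and PSIG: "is_pred_signature phi TD FD PD"
begin

abbreviation "CF \<equiv> FSigma phi fr TD FD"
lemmas Ob_CF = Ob_CC[OF VS SIG] and Hom_CF = Hom_CC[OF VS SIG] and Ty_CF = Ty_CC[OF VS SIG]
  and ident_CF = ident_CC[OF VS SIG] and comp_CF = comp_CC[OF VS SIG] and ext_CF = ext_CC[OF VS SIG]
  and pp_CF = pp_CC[OF VS SIG] and CF_simps = CC_simps[OF VS SIG]

abbreviation "LL \<equiv> LT phi fr TD FD PD T"
abbreviation "FF \<equiv> Form phi TD FD PD"
abbreviation "TT \<equiv> Thm phi fr TD FD PD T"

lemma Pr_LL: "x \<in> Pr LL G \<longleftrightarrow> (\<exists>\<phi>. x = (G, \<phi>) \<and> (G, \<phi>) \<in> FF)" by (auto simp: LT_def)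
lemma hle_LL: "hle LL G P Q \<longleftrightarrow> (fst P, snd P, snd Q) \<in> TT" by (simp add: LT_def)
lemma LL_simps:
  "htop LL G = (G, FTop)" "hbot LL G = (G, FBot)"
  "hand LL G P Q = (fst P, FConj (snd P) (snd Q))"
  "hor LL G P Q = (fst P, FDisj (snd P) (snd Q))"
  "himp LL G P Q = (fst P, FImp (snd P) (snd Q))"
  "prsub LL (D, G', as) R = (D, fsub fr D G' as (snd R))"
  "hall LL G S R = (fst S, FAll (fst (last (fst R))) (snd S) (snd R))"
  "hex LL G S R = (fst S, FEx (fst (last (fst R))) (snd S) (snd R))"
  by (simp_all add: LT_def)

lemma T_conj: "(G, z) \<in> FF \<Longrightarrow> (G, x) \<in> FF \<Longrightarrow> (G, y) \<in> FF \<Longrightarrow>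
  (G, z, FConj x y) \<in> TT \<longleftrightarrow> (G, z, x) \<in> TT \<and> (G, z, y) \<in> TT"
  by (meson Form.conj Thm.conjE1 Thm.conjE2 Thm.conjI Thm.cut)

lemma T_disj: "(G, z) \<in> FF \<Longrightarrow> (G, x) \<in> FF \<Longrightarrow> (G, y) \<in> FF \<Longrightarrow>
  (G, FDisj x y, z) \<in> TT \<longleftrightarrow> (G, x, z) \<in> TT \<and> (G, y, z) \<in> TT"
  by (meson Form.disj Thm.disjI1 Thm.disjI2 Thm.disjE Thm.cut)

lemma T_imp: "(G, z) \<in> FF \<Longrightarrow> (G, x) \<in> FF \<Longrightarrow> (G, y) \<in> FF \<Longrightarrow>
  (G, z, FImp x y) \<in> TT \<longleftrightarrow> (G, FConj z x, y) \<in> TT"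
  by (meson Form.conj Form.imp Thm.impI Thm.impE)

lemma h1: "\<forall>G\<in>Ob CF. pr_heyting LL G"
proof
  fix G assume "G \<in> Ob CF"
  then have G: "IsCtx G \<in> J phi TD FD" by (simp add: Ob_CF)
  show "pr_heyting LL G"
    unfolding pr_heyting_def heyting_prealg_def
  proof (intro HOL.conjI)
    show "htop LL G \<in> Pr LL G" using G by (simp add: Pr_LL LL_simps Form.top)
    show "hbot LL G \<in> Pr LL G" using G by (simp add: Pr_LL LL_simps Form.bot)
    show "\<forall>x\<in>Pr LL G. \<forall>y\<in>Pr LL G. hand LL G x y \<in> Pr LL G \<and> hor LL G x y \<in> Pr LL G \<and> himp LL G x y \<in> Pr LL G"
      by (auto simp: Pr_LL LL_simps intro: Form.conj Form.disj Form.imp)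
    show "\<forall>x\<in>Pr LL G. hle LL G x x" by (auto simp: Pr_LL hle_LL intro: Thm.refl)
    show "\<forall>x\<in>Pr LL G. \<forall>y\<in>Pr LL G. \<forall>z\<in>Pr LL G. hle LL G x y \<longrightarrow> hle LL G y z \<longrightarrow> hle LL G x z"
      by (clarsimp simp: Pr_LL hle_LL) (erule (1) Thm.cut)
    show "\<forall>x\<in>Pr LL G. hle LL G (hbot LL G) x \<and> hle LL G x (htop LL G)"
    proof
      fix x assume "x \<in> Pr LL G"
      then obtain \<phi> where x: "x = (G, \<phi>)" and F: "(G, \<phi>) \<in> FF" by (auto simp: Pr_LL)
      have "(G, FBot, \<phi>) \<in> TT" by (rule Thm.botE[OF Form.bot[OF G] F])
      moreover have "(G, \<phi>, FTop) \<in> TT" by (rule Thm.topI[OF F Form.top[OF G]])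
      ultimately show "hle LL G (hbot LL G) x \<and> hle LL G x (htop LL G)"
        using x by (simp add: hle_LL LL_simps)
    qed
    show "\<forall>x\<in>Pr LL G. \<forall>y\<in>Pr LL G. \<forall>z\<in>Pr LL G. hle LL G z (hand LL G x y) = (hle LL G z x \<and> hle LL G z y)"
      by (auto simp: Pr_LL hle_LL LL_simps T_conj)
    show "\<forall>x\<in>Pr LL G. \<forall>y\<in>Pr LL G. \<forall>z\<in>Pr LL G. hle LL G (hor LL G x y) z = (hle LL G x z \<and> hle LL G y z)"
      by (auto simp: Pr_LL hle_LL LL_simps T_disj)
    show "\<forall>x\<in>Pr LL G. \<forall>y\<in>Pr LL G. \<forall>z\<in>Pr LL G. hle LL G z (himp LL G x y) = hle LL G (hand LL G z x) y"
      by (auto simp: Pr_LL hle_LL LL_simps T_imp)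
  qed
qed

lemma h2: "\<forall>D\<in>Ob CF. \<forall>G\<in>Ob CF. \<forall>f\<in>Hom CF D G. heyting_hom LL G D (prsub LL f)"
proof (intro ballI)
  fix D G f assume "f \<in> Hom CF D G"
  then obtain as where f: "f = (D, G, as)" and m: "morJ phi TD FD D G as" by (auto simp: Hom_CF)
  have FS: "(D, fsub fr D G as \<phi>) \<in> FF" if "(G, \<phi>) \<in> FF" for \<phi>
    using Form_subst[OF VS SIG PSIG that m] .
  show "heyting_hom LL G D (prsub LL f)"
    unfolding heyting_hom_def
  proof (intro HOL.conjI)
    show "\<forall>x\<in>Pr LL G. prsub LL f x \<in> Pr LL D" using FS f by (auto simp: Pr_LL LL_simps)
    show "\<forall>x\<in>Pr LL G. \<forall>y\<in>Pr LL G. hle LL G x y \<longrightarrow> hle LL D (prsub LL f x) (prsub LL f y)"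
      using FS f m by (auto simp: Pr_LL LL_simps hle_LL intro: Thm.subst)
  qed (auto simp: f LL_simps Pr_LL)
qed

lemma h3: "\<forall>G\<in>Ob CF. \<forall>R\<in>Pr LL G. prsub LL (ident CF G) R = R"
  by (auto simp: Pr_LL ident_CF LL_simps Form_id[OF VS DB])

lemma h4: "\<forall>D\<in>Ob CF. \<forall>G\<in>Ob CF. \<forall>E\<in>Ob CF. \<forall>f\<in>Hom CF D G. \<forall>g\<in>Hom CF G E. \<forall>R\<in>Pr LL E.
         prsub LL (comp CF g f) R = prsub LL f (prsub LL g R)"
proof (intro ballI)
  fix D G E f g R assume "f \<in> Hom CF D G" "g \<in> Hom CF G E" "R \<in> Pr LL E"
  then obtain as bs \<phi> where f: "f = (D, G, as)" and g: "g = (G, E, bs)" and R: "R = (E, \<phi>)"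
    and m1: "morJ phi TD FD D G as" and m2: "morJ phi TD FD G E bs" and F: "(E, \<phi>) \<in> FF"
    by (auto simp: Hom_CF Pr_LL)
  show "prsub LL (comp CF g f) R = prsub LL f (prsub LL g R)"
    using Form_comp[OF VS SIG PSIG F m2 m1] f g R by (simp add: comp_CF LL_simps)
qed

lemma q:
  assumes G: "G \<in> Ob CF" and S: "S \<in> Ty CF G"
  shows "(\<forall>R\<in>Pr LL (ext CF G S). hall LL G S R \<in> Pr LL G \<and> hex LL G S R \<in> Pr LL G) \<and>
        (\<forall>R\<in>Pr LL (ext CF G S). \<forall>R'\<in>Pr LL (ext CF G S). hle LL (ext CF G S) R R' \<longrightarrow>
             hle LL G (hall LL G S R) (hall LL G S R') \<and> hle LL G (hex LL G S R) (hex LL G S R')) \<and>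
        (\<forall>Q\<in>Pr LL G. \<forall>R\<in>Pr LL (ext CF G S).
             (hle LL G Q (hall LL G S R) \<longleftrightarrow> hle LL (ext CF G S) (prsub LL (pp CF G S) Q) R) \<and>
             (hle LL G (hex LL G S R) Q \<longleftrightarrow> hle LL (ext CF G S) R (prsub LL (pp CF G S) Q))) \<and>
        (\<forall>D\<in>Ob CF. \<forall>f\<in>Hom CF D G. \<forall>R\<in>Pr LL (ext CF G S).
             prsub LL f (hall LL G S R) = hall LL D (tsub CF S f) (prsub LL (qmor CF D G f S) R) \<and>
             prsub LL f (hex LL G S R) = hex LL D (tsub CF S f) (prsub LL (qmor CF D G f S) R))"
proof -
  obtain B where SB: "S = (G, B)" and B: "IsType G B \<in> J phi TD FD" using S by (auto simp: Ty_CF)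
  let ?x = "fr (vars_ctx G)"
  let ?X = "G @ [(?x, B)]"
  have X: "IsCtx ?X \<in> J phi TD FD"
    using J.R2[OF _ B var_fresh(1)[OF VS]] G by (simp add: Ob_CF)
  have extX: "ext CF G S = ?X" using SB by (simp add: ext_CF)
  have ppQ: "prsub LL (pp CF G S) (G, \<phi>) = (?X, fsub_p fr G ?x B \<phi>)" for \<phi>
    using SB by (simp add: pp_CF LL_simps fsub_p_def)
  have Fp: "(?X, fsub_p fr G ?x B \<phi>) \<in> FF" if "(G, \<phi>) \<in> FF" for \<phi>
    using Form_subst[OF VS SIG PSIG that morJ_proj[OF X]] by (simp add: fsub_p_def)
  have FA: "(G, FAll ?x B \<theta>) \<in> FF" "(G, FEx ?x B \<theta>) \<in> FF" if "(?X, \<theta>) \<in> FF" for \<theta>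
    using that B by (auto intro: Form.all Form.ex)
  have hallX: "hall LL G S (?X, \<theta>) = (G, FAll ?x B \<theta>)" "hex LL G S (?X, \<theta>) = (G, FEx ?x B \<theta>)" for \<theta>
    using SB by (simp_all add: LL_simps)
  show ?thesis
  proof (intro HOL.conjI)
    show "\<forall>R\<in>Pr LL (ext CF G S). hall LL G S R \<in> Pr LL G \<and> hex LL G S R \<in> Pr LL G"
      using FA by (auto simp: extX Pr_LL hallX)
    show "\<forall>R\<in>Pr LL (ext CF G S). \<forall>R'\<in>Pr LL (ext CF G S). hle LL (ext CF G S) R R' \<longrightarrow>
             hle LL G (hall LL G S R) (hall LL G S R') \<and> hle LL G (hex LL G S R) (hex LL G S R')"
    proof (intro ballI HOL.impI)
      fix R R' assume "R \<in> Pr LL (ext CF G S)" "R' \<in> Pr LL (ext CF G S)" and le: "hle LL (ext CF G S) R R'"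
      then obtain \<theta> \<theta>' where R: "R = (?X, \<theta>)" and R': "R' = (?X, \<theta>')" and F1: "(?X, \<theta>) \<in> FF" and F2: "(?X, \<theta>') \<in> FF"
        by (auto simp: extX Pr_LL)
      have t: "(?X, \<theta>, \<theta>') \<in> TT" using le R R' by (simp add: hle_LL)
      have a1: "(?X, fsub_p fr G ?x B (FAll ?x B \<theta>), \<theta>) \<in> TT"
        using Thm.allE[OF Thm.refl[OF FA(1)[OF F1]] Fp[OF FA(1)[OF F1]] F1] .
      have a2: "(G, FAll ?x B \<theta>, FAll ?x B \<theta>') \<in> TT"
        using Thm.allI[OF Thm.cut[OF a1 t] FA(1)[OF F1] FA(1)[OF F2]] .
      have e1: "(?X, \<theta>', fsub_p fr G ?x B (FEx ?x B \<theta>')) \<in> TT"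
        using Thm.exI[OF Thm.refl[OF FA(2)[OF F2]] F2 Fp[OF FA(2)[OF F2]]] .
      have e2: "(G, FEx ?x B \<theta>, FEx ?x B \<theta>') \<in> TT"
        using Thm.exE[OF Thm.cut[OF t e1] FA(2)[OF F1] FA(2)[OF F2]] .
      show "hle LL G (hall LL G S R) (hall LL G S R') \<and> hle LL G (hex LL G S R) (hex LL G S R')"
        using a2 e2 R R' by (simp add: hallX hle_LL)
    qed
    show "\<forall>Q\<in>Pr LL G. \<forall>R\<in>Pr LL (ext CF G S).
             (hle LL G Q (hall LL G S R) \<longleftrightarrow> hle LL (ext CF G S) (prsub LL (pp CF G S) Q) R) \<and>
             (hle LL G (hex LL G S R) Q \<longleftrightarrow> hle LL (ext CF G S) R (prsub LL (pp CF G S) Q))"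
    proof (intro ballI)
      fix Q R assume "Q \<in> Pr LL G" "R \<in> Pr LL (ext CF G S)"
      then obtain \<phi> \<theta> where Q: "Q = (G, \<phi>)" and R: "R = (?X, \<theta>)" and F1: "(G, \<phi>) \<in> FF" and F2: "(?X, \<theta>) \<in> FF"
        by (auto simp: extX Pr_LL)
      have "(G, \<phi>, FAll ?x B \<theta>) \<in> TT \<longleftrightarrow> (?X, fsub_p fr G ?x B \<phi>, \<theta>) \<in> TT"
        using Thm.allI[OF _ F1 FA(1)[OF F2]] Thm.allE[OF _ Fp[OF F1] F2] by blast
      moreover have "(G, FEx ?x B \<theta>, \<phi>) \<in> TT \<longleftrightarrow> (?X, \<theta>, fsub_p fr G ?x B \<phi>) \<in> TT"
        using Thm.exE[OF _ FA(2)[OF F2] F1] Thm.exI[OF _ F2 Fp[OF F1]] by blast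
      ultimately show "(hle LL G Q (hall LL G S R) \<longleftrightarrow> hle LL (ext CF G S) (prsub LL (pp CF G S) Q) R) \<and>
             (hle LL G (hex LL G S R) Q \<longleftrightarrow> hle LL (ext CF G S) R (prsub LL (pp CF G S) Q))"
        using Q R by (simp add: hallX ppQ extX hle_LL)
    qed
    show "\<forall>D\<in>Ob CF. \<forall>f\<in>Hom CF D G. \<forall>R\<in>Pr LL (ext CF G S).
             prsub LL f (hall LL G S R) = hall LL D (tsub CF S f) (prsub LL (qmor CF D G f S) R) \<and>
             prsub LL f (hex LL G S R) = hex LL D (tsub CF S f) (prsub LL (qmor CF D G f S) R)"
    proof (intro ballI)
      fix D f R assume "f \<in> Hom CF D G" "R \<in> Pr LL (ext CF G S)"
      then obtain as \<theta> where f: "f = (D, G, as)" and R: "R = (?X, \<theta>)"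
        by (auto simp: extX Pr_LL Hom_CF)
      show "prsub LL f (hall LL G S R) = hall LL D (tsub CF S f) (prsub LL (qmor CF D G f S) R) \<and>
             prsub LL f (hex LL G S R) = hex LL D (tsub CF S f) (prsub LL (qmor CF D G f S) R)"
        using f R SB by (simp add: hallX qmor_def CF_simps LL_simps Let_def)
    qed
  qed
qed

lemma hyper: "first_order_hyperdoctrine CF LL"
  unfolding first_order_hyperdoctrine_def
  apply (intro HOL.conjI)
       apply (rule cwf[OF VS SIG])
      apply (rule h1)
     apply (rule h2)
    apply (rule h3)
   apply (rule h4)
  apply (intro ballI)
  apply (rule q; assumption)
  done

end

theorem mainTheorem17:
  fixes phi :: "'v set \<Rightarrow> 'v set" and fr :: "'v set \<Rightarrow> 'v"
    and TD :: "'t \<Rightarrow> (('v,'f,'t) ctx \<times> nat list) option"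
    and FD :: "'f \<Rightarrow> (('v,'f,'t) ctx \<times> nat list \<times> ('v,'f,'t) pty) option"
    and PD :: "'p \<Rightarrow> (('v,'f,'t) ctx \<times> nat list) option"
    and T :: "(('v,'f,'t) ctx \<times> ('v,'f,'t,'p) fm \<times> ('v,'f,'t,'p) fm) set"
  assumes "var_system phi fr"
    and "de_bruijn phi fr"
    and "is_signature phi TD FD"
    and "is_pred_signature phi TD FD PD"
    and "is_theory phi TD FD PD T"
  shows "first_order_hyperdoctrine (FSigma phi fr TD FD) (LT phi fr TD FD PD T) \<and>
         (\<forall>G \<phi> \<psi>. (G, \<phi>) \<in> Pr (LT phi fr TD FD PD T) G \<longrightarrow> (G, \<psi>) \<in> Pr (LT phi fr TD FD PD T) G \<longrightarrow>
            (hle (LT phi fr TD FD PD T) G (G, \<phi>) (G, \<psi>) \<longleftrightarrow> (G, \<phi>, \<psi>) \<in> Thm phi fr TD FD PD T))"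
proof (intro HOL.conjI)
  show "first_order_hyperdoctrine (FSigma phi fr TD FD) (LT phi fr TD FD PD T)"
    using hyper[OF assms(1) assms(2) assms(3) assms(4)] .
  show "\<forall>G \<phi> \<psi>. (G, \<phi>) \<in> Pr (LT phi fr TD FD PD T) G \<longrightarrow> (G, \<psi>) \<in> Pr (LT phi fr TD FD PD T) G \<longrightarrow>
            (hle (LT phi fr TD FD PD T) G (G, \<phi>) (G, \<psi>) \<longleftrightarrow> (G, \<phi>, \<psi>) \<in> Thm phi fr TD FD PD T)"
    by (simp add: LT_def)
qed

end
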